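(* If $\lambda_n\to\infty$, then for every $d>-1$, $$\rho(\psi_d,\lambda_n)=1-\frac{(d-1)^2}{6\lambda_n}+O(\lambda_n^{-2}).$$
   Context: $\lambda_n>0$ is a sequence of parameters; $\xi\sim\mathrm{Poisson}(\lambda_n)$. For a real function $h$ on $[0,\infty)$, $r_n=\lambda_n^{-1}\mathrm{cov}(h(\xi),\xi)$ and $\rho(h,\lambda_n)=\mathrm{corr}(h(\xi)-r_n\xi,\ \xi^2-(2\lambda_n+1)\xi)$. Power divergence functions: $\psi_d(x)=\frac{2}{d(d+1)}x[(x/\lambda_n)^d-1]$ for $d>-1$, $d\ne0$, and $\psi_0(x)=2x\log(x/\lambda_n)$. *)

theory Defs
  imports "HOL-Probability.Probability" "HOL-Library.Landau_Symbols"
begin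

definition pois_E :: "real \<Rightarrow> (real \<Rightarrow> real) \<Rightarrow> real" where
  "pois_E l h = measure_pmf.expectation (poisson_pmf l) (\<lambda>k. h (real k))"

definition pois_cov :: "real \<Rightarrow> (real \<Rightarrow> real) \<Rightarrow> (real \<Rightarrow> real) \<Rightarrow> real" where
  "pois_cov l f g = pois_E l (\<lambda>x. f x * g x) - pois_E l f * pois_E l g"

definition pois_corr :: "real \<Rightarrow> (real \<Rightarrow> real) \<Rightarrow> (real \<Rightarrow> real) \<Rightarrow> real" where
  "pois_corr l f g = pois_cov l f g / sqrt (pois_cov l f f * pois_cov l g g)"

definition r_coef :: "(real \<Rightarrow> real) \<Rightarrow> real \<Rightarrow> real" where
  "r_coef h l = pois_cov l h (\<lambda>x. x) / l"

definition rho :: "(real \<Rightarrow> real) \<Rightarrow> real \<Rightarrow> real" where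
  "rho h l = pois_corr l (\<lambda>x. h x - r_coef h l * x) (\<lambda>x. x\<^sup>2 - (2 * l + 1) * x)"

text \<open>Power divergence functions; at x = 0 the value is 0 (0 powr d = 0, ln 0 = 0).\<close>
definition psi :: "real \<Rightarrow> real \<Rightarrow> real \<Rightarrow> real" where
  "psi d l x = (if d = 0 then 2 * x * ln (x / l)
               else 2 / (d * (d + 1)) * x * ((x / l) powr d - 1))"

end

theory Submission
  imports Defs
begin


definition gb :: "(real \<Rightarrow> real) \<Rightarrow> bool" where
  "gb f \<longleftrightarrow> (\<exists>C B. \<forall>x\<ge>0. \<bar>f x\<bar> \<le> C * exp (B * x))"

lemma gbI: "(\<And>x. x \<ge> 0 \<Longrightarrow> \<bar>f x\<bar> \<le> C * exp (B * x)) \<Longrightarrow> gb f"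
  unfolding gb_def by blast

lemma gbE:
  assumes "gb f"
  obtains C B where "C \<ge> 0" "B \<ge> 0" "\<And>x. x \<ge> 0 \<Longrightarrow> \<bar>f x\<bar> \<le> C * exp (B * x)"
proof -
  obtain C B where h: "\<forall>x\<ge>0. \<bar>f x\<bar> \<le> C * exp (B * x)" using assms unfolding gb_def by blast
  have C: "C \<ge> 0" proof -
    have "\<bar>f 0\<bar> \<le> C" using h[rule_format, of 0] by simp
    then show ?thesis by linarith
  qed
  show ?thesis
  proof
    show "C \<ge> 0" by fact
    show "0 \<le> max B 0" by simp
    fix x :: real assume x: "x \<ge> 0"
    have "C * exp (B * x) \<le> C * exp (max B 0 * x)"
      using x C by (intro mult_left_mono) (auto intro: mult_right_mono)
    then show "\<bar>f x\<bar> \<le> C * exp (max B 0 * x)" using h x by force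
  qed
qed

lemma gb_const[simp, intro]: "gb (\<lambda>x. c)"
  by (rule gbI[of _ "\<bar>c\<bar>" 0]) auto

lemma gb_id[simp, intro]: "gb (\<lambda>x. x)"
proof (rule gbI[of _ 1 1])
  fix x :: real assume "x \<ge> 0"
  moreover have "x \<le> exp x" using exp_ge_add_one_self[of x] by linarith
  ultimately show "\<bar>x\<bar> \<le> 1 * exp (1 * x)" by simp
qed

lemma gb_add[intro]:
  assumes "gb f" "gb g" shows "gb (\<lambda>x. f x + g x)"
proof -
  obtain C1 B1 where 1: "C1 \<ge> 0" "B1 \<ge> 0" "\<And>x. x \<ge> 0 \<Longrightarrow> \<bar>f x\<bar> \<le> C1 * exp (B1 * x)"
    using gbE[OF assms(1)] by blast
  obtain C2 B2 where 2: "C2 \<ge> 0" "B2 \<ge> 0" "\<And>x. x \<ge> 0 \<Longrightarrow> \<bar>g x\<bar> \<le> C2 * exp (B2 * x)"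
    using gbE[OF assms(2)] by blast
  show ?thesis
  proof (rule gbI[of _ "C1 + C2" "B1 + B2"])
    fix x :: real assume x: "x \<ge> 0"
    have a: "exp (B1 * x) \<le> exp ((B1 + B2) * x)" using x 1 2 by (simp add: distrib_right)
    have b: "exp (B2 * x) \<le> exp ((B1 + B2) * x)" using x 1 2 by (simp add: distrib_right)
    have "\<bar>f x + g x\<bar> \<le> C1 * exp (B1 * x) + C2 * exp (B2 * x)"
      using 1(3)[OF x] 2(3)[OF x] by linarith
    also have "\<dots> \<le> C1 * exp ((B1 + B2) * x) + C2 * exp ((B1 + B2) * x)"
      using a b 1 2 by (intro add_mono mult_left_mono) auto
    finally show "\<bar>f x + g x\<bar> \<le> (C1 + C2) * exp ((B1 + B2) * x)" by (simp add: distrib_right)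
  qed
qed

lemma gb_mult[intro]:
  assumes "gb f" "gb g" shows "gb (\<lambda>x. f x * g x)"
proof -
  obtain C1 B1 where 1: "C1 \<ge> 0" "B1 \<ge> 0" "\<And>x. x \<ge> 0 \<Longrightarrow> \<bar>f x\<bar> \<le> C1 * exp (B1 * x)"
    using gbE[OF assms(1)] by blast
  obtain C2 B2 where 2: "C2 \<ge> 0" "B2 \<ge> 0" "\<And>x. x \<ge> 0 \<Longrightarrow> \<bar>g x\<bar> \<le> C2 * exp (B2 * x)"
    using gbE[OF assms(2)] by blast
  show ?thesis
  proof (rule gbI[of _ "C1 * C2" "B1 + B2"])
    fix x :: real assume x: "x \<ge> 0"
    have "\<bar>f x * g x\<bar> \<le> (C1 * exp (B1 * x)) * (C2 * exp (B2 * x))"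
      unfolding abs_mult using 1(3)[OF x] 2(3)[OF x] by (intro mult_mono) auto
    also have "\<dots> = (C1 * C2) * exp ((B1 + B2) * x)" by (simp add: distrib_right exp_add)
    finally show "\<bar>f x * g x\<bar> \<le> (C1 * C2) * exp ((B1 + B2) * x)" .
  qed
qed

lemma gb_minus[intro]: "gb f \<Longrightarrow> gb (\<lambda>x. - f x)"
  unfolding gb_def by simp

lemma gb_diff[intro]: "gb f \<Longrightarrow> gb g \<Longrightarrow> gb (\<lambda>x. f x - g x)"
  using gb_add[of f "\<lambda>x. - g x"] by auto

lemma gb_power[intro]: "gb f \<Longrightarrow> gb (\<lambda>x. f x ^ n)"
  by (induction n) auto

lemma gb_shift[intro]:
  assumes "gb f" "c \<ge> 0" shows "gb (\<lambda>x. f (x + c))"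
proof -
  obtain C B where 1: "C \<ge> 0" "B \<ge> 0" "\<And>x. x \<ge> 0 \<Longrightarrow> \<bar>f x\<bar> \<le> C * exp (B * x)"
    using gbE[OF assms(1)] by blast
  show ?thesis
  proof (rule gbI[of _ "C * exp (B * c)" B])
    fix x :: real assume x: "x \<ge> 0"
    have "\<bar>f (x + c)\<bar> \<le> C * exp (B * (x + c))" using 1(3)[of "x + c"] x assms(2) by simp
    also have "\<dots> = C * exp (B * c) * exp (B * x)" by (simp add: distrib_left exp_add)
    finally show "\<bar>f (x + c)\<bar> \<le> C * exp (B * c) * exp (B * x)" .
  qed
qed



definition pw :: "real \<Rightarrow> nat \<Rightarrow> real" where
  "pw l k = l ^ k / fact k * exp (- l)"

lemma pw_nonneg: "l > 0 \<Longrightarrow> pw l k \<ge> 0"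
  unfolding pw_def by simp

lemma pE_sum_gen:
  assumes l: "l > 0" and s: "summable (\<lambda>k. pw l k * \<bar>f (real k)\<bar>)"
  shows "integrable (measure_pmf (poisson_pmf l)) (\<lambda>k. f (real k))"
    and "(\<lambda>k. pw l k * f (real k)) sums pois_E l f"
proof -
  have pmf: "\<And>k. pmf (poisson_pmf l) k = pw l k" using l by (simp add: pw_def)
  have ic: "integrable (count_space UNIV) (\<lambda>k. pmf (poisson_pmf l) k *\<^sub>R f (real k))"
    unfolding integrable_count_space_nat_iff using s l by (simp add: pmf abs_mult pw_nonneg)
  show "integrable (measure_pmf (poisson_pmf l)) (\<lambda>k. f (real k))"
    unfolding measure_pmf_eq_density using ic by (subst integrable_density) auto
  have "pois_E l f = integral\<^sup>L (count_space UNIV) (\<lambda>k. pmf (poisson_pmf l) k *\<^sub>R f (real k))"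
    unfolding pois_E_def measure_pmf_eq_density by (subst integral_density) auto
  then show "(\<lambda>k. pw l k * f (real k)) sums pois_E l f"
    using sums_integral_count_space_nat[OF ic] by (simp add: pmf)
qed

lemma gb_summable:
  assumes l: "l > 0" and g: "gb f"
  shows "summable (\<lambda>k. pw l k * \<bar>f (real k)\<bar>)"
proof -
  obtain C B where 1: "C \<ge> 0" "B \<ge> 0" "\<And>x. x \<ge> 0 \<Longrightarrow> \<bar>f x\<bar> \<le> C * exp (B * x)"
    using gbE[OF g] by blast
  have se: "summable (\<lambda>k. C * exp (- l) * (inverse (fact k) * (l * exp B) ^ k))"
    by (intro summable_mult summable_exp)
  show ?thesis
  proof (rule summable_comparison_test'[OF se])
    fix k :: nat
    have e: "exp (B * real k) = exp B ^ k" by (simp add: exp_of_nat_mult[symmetric] mult.commute)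
    have "norm (pw l k * \<bar>f (real k)\<bar>) = pw l k * \<bar>f (real k)\<bar>" using l by (simp add: pw_nonneg)
    also have "\<dots> \<le> pw l k * (C * exp (B * real k))"
      using 1(3)[of "real k"] l by (intro mult_left_mono) (auto simp: pw_nonneg)
    also have "\<dots> = C * exp (- l) * (inverse (fact k) * (l * exp B) ^ k)"
      unfolding e pw_def by (simp add: field_simps power_mult_distrib)
    finally show "norm (pw l k * \<bar>f (real k)\<bar>) \<le> C * exp (- l) * (inverse (fact k) * (l * exp B) ^ k)" .
  qed
qed

lemma pE_int: "l > 0 \<Longrightarrow> gb f \<Longrightarrow> integrable (measure_pmf (poisson_pmf l)) (\<lambda>k. f (real k))"
  using pE_sum_gen(1) gb_summable by blast

lemma pE_sums: "l > 0 \<Longrightarrow> gb f \<Longrightarrow> (\<lambda>k. pw l k * f (real k)) sums pois_E l f"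
  using pE_sum_gen(2) gb_summable by blast

lemma pE_add:
  assumes "l > 0" "gb f" "gb g"
  shows "pois_E l (\<lambda>x. f x + g x) = pois_E l f + pois_E l g"
proof -
  have "(\<lambda>k. pw l k * f (real k) + pw l k * g (real k)) sums (pois_E l f + pois_E l g)"
    using assms by (intro sums_add pE_sums)
  moreover have "(\<lambda>k. pw l k * (f (real k) + g (real k))) sums pois_E l (\<lambda>x. f x + g x)"
    using assms by (intro pE_sums) auto
  ultimately show ?thesis by (simp add: distrib_left sums_unique2)
qed

lemma pE_cmult: "pois_E l (\<lambda>x. c * f x) = c * pois_E l f"
  unfolding pois_E_def by simp

lemma pE_uminus: "pois_E l (\<lambda>x. - f x) = - pois_E l f"
  unfolding pois_E_def by simp

lemma pE_diff:
  assumes "l > 0" "gb f" "gb g"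
  shows "pois_E l (\<lambda>x. f x - g x) = pois_E l f - pois_E l g"
  using pE_add[of l f "\<lambda>x. - g x"] assms by (auto simp: pE_uminus)

lemma pE_const[simp]: "pois_E l (\<lambda>x. c) = c"
  unfolding pois_E_def by simp

lemma pE_mono:
  assumes "l > 0" "gb f" "gb g" "\<And>x. x \<ge> 0 \<Longrightarrow> f x \<le> g x"
  shows "pois_E l f \<le> pois_E l g"
proof (rule sums_le[OF _ pE_sums pE_sums])
  show "\<And>k. pw l k * f (real k) \<le> pw l k * g (real k)"
    using assms by (intro mult_left_mono) (auto simp: pw_nonneg)
qed (use assms in auto)

lemma pE_nonneg:
  assumes "l > 0" "gb f" "\<And>x. x \<ge> 0 \<Longrightarrow> 0 \<le> f x"
  shows "0 \<le> pois_E l f"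
  using pE_mono[of l "\<lambda>x. 0" f] assms by auto

lemma pE_cong:
  assumes "\<And>x. x \<ge> 0 \<Longrightarrow> f x = g x"
  shows "pois_E l f = pois_E l g"
  unfolding pois_E_def using assms by (intro Bochner_Integration.integral_cong) auto

lemma pE_stein:
  assumes l: "l > 0" and g: "gb F"
  shows "pois_E l (\<lambda>x. x * F x) = l * pois_E l (\<lambda>x. F (x + 1))"
proof -
  define a where "a k = pw l k * (real k * F (real k))" for k
  have s1: "a sums pois_E l (\<lambda>x. x * F x)"
    unfolding a_def using l g by (intro pE_sums) auto
  have "(\<lambda>k. l * (pw l k * F (real k + 1))) sums (l * pois_E l (\<lambda>x. F (x + 1)))"
    using pE_sums[OF l gb_shift[OF g, of 1]] by (intro sums_mult) auto
  moreover have "\<And>k. a (Suc k) = l * (pw l k * F (real k + 1))"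
  proof -
    fix k :: nat
    have e: "pw l (Suc k) * real (Suc k) = l * pw l k"
      unfolding pw_def by (simp del: of_nat_Suc add: field_simps)
    have "a (Suc k) = (pw l (Suc k) * real (Suc k)) * F (real k + 1)"
      unfolding a_def by (simp add: add.commute)
    then show "a (Suc k) = l * (pw l k * F (real k + 1))" by (simp only: e mult.assoc)
  qed
  ultimately have "(\<lambda>k. a (Suc k)) sums (l * pois_E l (\<lambda>x. F (x + 1)))" by simp
  then have "a sums (l * pois_E l (\<lambda>x. F (x + 1)) + a 0)" by (simp add: sums_Suc_iff)
  then have "a sums (l * pois_E l (\<lambda>x. F (x + 1)))" by (simp add: a_def)
  with s1 show ?thesis by (simp add: sums_unique2)
qed

lemma gb_exp[intro]: "gb (\<lambda>x. exp (s * x))"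
  by (rule gbI[of _ 1 s]) auto

lemma pE_mgf:
  assumes l: "l > 0"
  shows "pois_E l (\<lambda>x. exp (s * x)) = exp (l * (exp s - 1))"
proof -
  have "(\<lambda>k. exp (- l) * ((l * exp s) ^ k /\<^sub>R fact k)) sums (exp (- l) * exp (l * exp s))"
    by (intro sums_mult exp_converges)
  moreover have "\<And>k. exp (- l) * ((l * exp s) ^ k /\<^sub>R fact k) = pw l k * exp (s * real k)"
    unfolding pw_def by (simp add: field_simps power_mult_distrib exp_of_nat_mult[symmetric] mult.commute)
  ultimately have "(\<lambda>k. pw l k * exp (s * real k)) sums (exp (- l) * exp (l * exp s))" by simp
  then have "pois_E l (\<lambda>x. exp (s * x)) = exp (- l) * exp (l * exp s)"
    using pE_sums[OF l gb_exp[of s]] by (simp add: sums_unique2)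
  also have "\<dots> = exp (l * (exp s - 1))" by (simp add: exp_add[symmetric] algebra_simps)
  finally show ?thesis .
qed



definition D :: "(real \<Rightarrow> real) \<Rightarrow> real \<Rightarrow> real" where
  "D f x = f (x + 1) - f x"

definition C1 :: "real \<Rightarrow> real \<Rightarrow> real" where "C1 l x = x - l"
definition C2 :: "real \<Rightarrow> real \<Rightarrow> real" where "C2 l x = (x - l)\<^sup>2 - x"
definition C3 :: "real \<Rightarrow> real \<Rightarrow> real" where
  "C3 l x = (x - l) ^ 3 - 3 * (x - l)\<^sup>2 + (2 - 3 * l) * (x - l) + 2 * l"

lemma gb_D[intro]: "gb f \<Longrightarrow> gb (D f)"
  unfolding D_def by (intro gb_diff gb_shift) auto

lemma gb_C1[intro]: "gb (C1 l)" and gb_C1s[intro]: "gb (\<lambda>x. C1 l (x - 1))"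
  unfolding C1_def by (intro gb_diff gb_id gb_const)+

lemma gb_C2[intro]: "gb (C2 l)" and gb_C2s[intro]: "gb (\<lambda>x. C2 l (x - 1))"
  unfolding C2_def by (intro gb_diff gb_power gb_id gb_const)+

lemma gb_C3[intro]: "gb (C3 l)"
  unfolding C3_def by (intro gb_diff gb_add gb_mult gb_power gb_id gb_const)+

lemma C1_rec: "C1 l x = x * 1 - l * 1"
  unfolding C1_def by simp
lemma C2_rec: "C2 l x = x * C1 l (x - 1) - l * C1 l x"
  unfolding C1_def C2_def by (simp add: power2_eq_square algebra_simps)
lemma C3_rec: "C3 l x = x * C2 l (x - 1) - l * C2 l x"
  unfolding C3_def C2_def by (simp add: power2_eq_square power3_eq_cube algebra_simps)

lemma shift_rec:
  assumes l: "l > 0" and f: "gb f" and g: "gb g" and gs: "gb (\<lambda>x. g (x - 1))"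
  shows "pois_E l (\<lambda>x. f x * (x * g (x - 1) - l * g x)) = l * pois_E l (\<lambda>x. D f x * g x)"
proof -
  have fs: "gb (\<lambda>x. f (x + 1))" using gb_shift[OF f, of 1] by simp
  have "pois_E l (\<lambda>x. f x * (x * g (x - 1) - l * g x))
      = pois_E l (\<lambda>x. x * (f x * g (x - 1)) - l * (f x * g x))"
    by (rule pE_cong) (simp add: algebra_simps)
  also have "\<dots> = pois_E l (\<lambda>x. x * (f x * g (x - 1))) - pois_E l (\<lambda>x. l * (f x * g x))"
    using l f g gs by (intro pE_diff) auto
  also have "pois_E l (\<lambda>x. x * (f x * g (x - 1))) = l * pois_E l (\<lambda>x. f (x + 1) * g x)"
    using pE_stein[OF l gb_mult[OF f gs]] by simp
  also have "pois_E l (\<lambda>x. l * (f x * g x)) = l * pois_E l (\<lambda>x. f x * g x)"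
    by (rule pE_cmult)
  finally have 1: "pois_E l (\<lambda>x. f x * (x * g (x - 1) - l * g x))
     = l * pois_E l (\<lambda>x. f (x + 1) * g x) - l * pois_E l (\<lambda>x. f x * g x)" .
  have "pois_E l (\<lambda>x. D f x * g x) = pois_E l (\<lambda>x. f (x + 1) * g x - f x * g x)"
    by (rule pE_cong) (simp add: D_def algebra_simps)
  also have "\<dots> = pois_E l (\<lambda>x. f (x + 1) * g x) - pois_E l (\<lambda>x. f x * g x)"
    using l f g fs by (intro pE_diff) auto
  finally have 2: "pois_E l (\<lambda>x. D f x * g x)
     = pois_E l (\<lambda>x. f (x + 1) * g x) - pois_E l (\<lambda>x. f x * g x)" .
  show ?thesis unfolding 1 2 by (rule right_diff_distrib[symmetric])
qed

lemma E_C1: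
  assumes l: "l > 0" and f: "gb f"
  shows "pois_E l (\<lambda>x. f x * C1 l x) = l * pois_E l (D f)"
proof -
  have "pois_E l (\<lambda>x. f x * C1 l x) = pois_E l (\<lambda>x. f x * (x * 1 - l * 1))"
    by (simp add: C1_def)
  also have "\<dots> = l * pois_E l (\<lambda>x. D f x * 1)"
    using shift_rec[OF l f, of "\<lambda>x. 1"] by simp
  finally show ?thesis by simp
qed

lemma E_C2:
  assumes l: "l > 0" and f: "gb f"
  shows "pois_E l (\<lambda>x. f x * C2 l x) = l ^ 2 * pois_E l (D (D f))"
proof -
  have "pois_E l (\<lambda>x. f x * C2 l x) = pois_E l (\<lambda>x. f x * (x * C1 l (x - 1) - l * C1 l x))"
    by (simp add: C2_rec)
  also have "\<dots> = l * pois_E l (\<lambda>x. D f x * C1 l x)"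
    using shift_rec[OF l f, of "C1 l"] by auto
  also have "\<dots> = l * (l * pois_E l (D (D f)))"
    using E_C1[OF l gb_D[OF f]] by simp
  finally show ?thesis by (simp add: power2_eq_square)
qed

lemma E_C3:
  assumes l: "l > 0" and f: "gb f"
  shows "pois_E l (\<lambda>x. f x * C3 l x) = l ^ 3 * pois_E l (D (D (D f)))"
proof -
  have "pois_E l (\<lambda>x. f x * C3 l x) = pois_E l (\<lambda>x. f x * (x * C2 l (x - 1) - l * C2 l x))"
    by (simp add: C3_rec)
  also have "\<dots> = l * pois_E l (\<lambda>x. D f x * C2 l x)"
    using shift_rec[OF l f, of "C2 l"] by auto
  also have "\<dots> = l * (l ^ 2 * pois_E l (D (D (D f))))"
    using E_C2[OF l gb_D[OF f]] by simp
  finally show ?thesis by (simp add: power3_eq_cube power2_eq_square)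
qed

lemma D_const: "D (\<lambda>x. c) = (\<lambda>x. 0)"
  by (simp add: D_def fun_eq_iff)
lemma D_C1: "D (C1 l) = (\<lambda>x. 1)"
  by (simp add: D_def C1_def fun_eq_iff)
lemma DD_C2: "D (D (C2 l)) = (\<lambda>x. 2)"
  by (simp add: D_def C2_def fun_eq_iff power2_eq_square algebra_simps)
lemma DDD_C3: "D (D (D (C3 l))) = (\<lambda>x. 6)"
  by (simp add: D_def C3_def fun_eq_iff power2_eq_square power3_eq_cube algebra_simps)
lemma DD_C1: "D (D (C1 l)) = (\<lambda>x. 0)"
  by (simp add: D_def C1_def fun_eq_iff)
lemma DDD_C1: "D (D (D (C1 l))) = (\<lambda>x. 0)"
  by (simp add: D_def C1_def fun_eq_iff)
lemma DDD_C2: "D (D (D (C2 l))) = (\<lambda>x. 0)"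
  by (simp add: D_def C2_def fun_eq_iff power2_eq_square algebra_simps)

lemma EC1: "l > 0 \<Longrightarrow> pois_E l (C1 l) = 0"
  using E_C1[of l "\<lambda>x. 1"] by (simp add: D_const)
lemma EC2: "l > 0 \<Longrightarrow> pois_E l (C2 l) = 0"
  using E_C2[of l "\<lambda>x. 1"] by (simp add: D_const)
lemma EC3: "l > 0 \<Longrightarrow> pois_E l (C3 l) = 0"
  using E_C3[of l "\<lambda>x. 1"] by (simp add: D_const)
lemma EC11: "l > 0 \<Longrightarrow> pois_E l (\<lambda>x. C1 l x * C1 l x) = l"
  using E_C1[of l "C1 l"] by (auto simp: D_C1)
lemma EC22: "l > 0 \<Longrightarrow> pois_E l (\<lambda>x. C2 l x * C2 l x) = 2 * l ^ 2"
  using E_C2[of l "C2 l"] gb_C2[of l] by (auto simp: DD_C2 mult.commute)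
lemma EC33: "l > 0 \<Longrightarrow> pois_E l (\<lambda>x. C3 l x * C3 l x) = 6 * l ^ 3"
  using E_C3[of l "C3 l"] gb_C3[of l] by (auto simp: DDD_C3 mult.commute)
lemma EC12: "l > 0 \<Longrightarrow> pois_E l (\<lambda>x. C1 l x * C2 l x) = 0"
  using E_C2[of l "C1 l"] by (auto simp: DD_C1)
lemma EC13: "l > 0 \<Longrightarrow> pois_E l (\<lambda>x. C1 l x * C3 l x) = 0"
  using E_C3[of l "C1 l"] by (auto simp: DDD_C1)
lemma EC23: "l > 0 \<Longrightarrow> pois_E l (\<lambda>x. C2 l x * C3 l x) = 0"
  using E_C3[of l "C2 l"] by (auto simp: DDD_C2)



lemmas gb_simps = gb_add gb_diff gb_mult gb_power gb_minus gb_C1 gb_C2 gb_C3 gb_D gb_id gb_const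

lemma pE_lin2:
  assumes "l > 0" "gb f" "gb g"
  shows "pois_E l (\<lambda>x. a * f x + b * g x) = a * pois_E l f + b * pois_E l g"
  using assms by (simp add: pE_add pE_diff gb_simps pE_cmult)

lemma pois_var:
  assumes l: "l > 0" and f: "gb f"
  shows "pois_cov l f f = pois_E l (\<lambda>x. (f x - pois_E l f)\<^sup>2)"
proof -
  define m where "m = pois_E l f"
  have "pois_E l (\<lambda>x. (f x - m)\<^sup>2) = pois_E l (\<lambda>x. f x * f x + (- 2 * m) * f x + m\<^sup>2)"
    by (rule pE_cong) (simp add: power2_eq_square algebra_simps)
  also have "\<dots> = pois_E l (\<lambda>x. f x * f x) + (- 2 * m) * m + m\<^sup>2"
    using l f by (simp add: pE_add pE_diff gb_simps pE_cmult m_def)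
  finally show ?thesis unfolding pois_cov_def m_def by (simp add: power2_eq_square)
qed

lemma cov_Y:
  assumes l: "l > 0" and f: "gb f"
  shows "pois_cov l f (\<lambda>x. x\<^sup>2 - (2 * l + 1) * x) = pois_E l (\<lambda>x. f x * C2 l x)"
proof -
  have "pois_E l (\<lambda>x. f x * (x\<^sup>2 - (2 * l + 1) * x)) = pois_E l (\<lambda>x. f x * C2 l x + (- l\<^sup>2) * f x)"
    by (rule pE_cong) (simp add: C2_def power2_eq_square algebra_simps)
  also have "\<dots> = pois_E l (\<lambda>x. f x * C2 l x) - l\<^sup>2 * pois_E l f"
    using l f by (simp add: pE_add pE_diff gb_simps pE_cmult)
  finally have 1: "pois_E l (\<lambda>x. f x * (x\<^sup>2 - (2 * l + 1) * x)) = pois_E l (\<lambda>x. f x * C2 l x) - l\<^sup>2 * pois_E l f" .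
  have "pois_E l (\<lambda>x. x\<^sup>2 - (2 * l + 1) * x) = pois_E l (\<lambda>x. C2 l x + (- l\<^sup>2))"
    by (rule pE_cong) (simp add: C2_def power2_eq_square algebra_simps)
  also have "\<dots> = - l\<^sup>2"
    using l by (simp add: pE_add pE_diff gb_simps EC2)
  finally show ?thesis unfolding pois_cov_def 1 by simp
qed

lemma cov_YY:
  assumes l: "l > 0"
  shows "pois_cov l (\<lambda>x. x\<^sup>2 - (2 * l + 1) * x) (\<lambda>x. x\<^sup>2 - (2 * l + 1) * x) = 2 * l\<^sup>2"
proof -
  have g: "gb (\<lambda>x. x\<^sup>2 - (2 * l + 1) * x)" by (simp add: gb_simps)
  have "pois_E l (\<lambda>x. (x\<^sup>2 - (2 * l + 1) * x) * C2 l x) = pois_E l (\<lambda>x. C2 l x * C2 l x + (- l\<^sup>2) * C2 l x)"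
    by (rule pE_cong) (simp add: C2_def power2_eq_square algebra_simps)
  also have "\<dots> = 2 * l\<^sup>2"
    using l by (simp add: pE_add pE_diff gb_simps pE_cmult EC2 EC22)
  finally show ?thesis using cov_Y[OF l g] by simp
qed

lemma E_id: "l > 0 \<Longrightarrow> pois_E l (\<lambda>x. x) = l"
proof -
  assume l: "l > 0"
  have "pois_E l (\<lambda>x. x) = pois_E l (\<lambda>x. C1 l x + l)" by (rule pE_cong) (simp add: C1_def)
  also have "\<dots> = l" using l by (simp add: pE_add pE_diff gb_simps EC1)
  finally show ?thesis .
qed

lemma r_coef_eq:
  assumes l: "l > 0" and h: "gb h"
  shows "r_coef h l = pois_E l (D h)"
proof -
  have "pois_E l (\<lambda>x. h x * x) = pois_E l (\<lambda>x. h x * C1 l x + l * h x)"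
    by (rule pE_cong) (simp add: C1_def algebra_simps)
  also have "\<dots> = l * pois_E l (D h) + l * pois_E l h"
    using l h by (simp add: pE_add pE_diff gb_simps pE_cmult E_C1)
  finally show ?thesis using l unfolding r_coef_def pois_cov_def by (simp add: E_id)
qed



lemma gb_divide[intro]: "gb f \<Longrightarrow> gb (\<lambda>x. f x / c)"
  using gb_mult[of f "\<lambda>x. 1 / c"] by simp

lemma pE_divide: "pois_E l (\<lambda>x. f x / c) = pois_E l f / c"
  unfolding pois_E_def by simp

lemmas lin_simps = pE_add pE_diff gb_simps pE_cmult pE_const pE_divide gb_divide

lemma rho_struct:
  assumes l: "l > 0" and h: "gb h"
  defines "m \<equiv> pois_E l h" and "d1 \<equiv> pois_E l (D h)" and "d2 \<equiv> pois_E l (D (D h))"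
    and "d3 \<equiv> pois_E l (D (D (D h)))"
  defines "W \<equiv> \<lambda>x. h x - (m + d1 * C1 l x + d2 / 2 * C2 l x + d3 / 6 * C3 l x)"
  shows "rho h l = l\<^sup>2 * d2 /
           sqrt ((l\<^sup>2 * d2\<^sup>2 / 2 + l ^ 3 * d3\<^sup>2 / 6 + pois_E l (\<lambda>x. W x * W x)) * (2 * l\<^sup>2))"
    and "0 \<le> pois_E l (\<lambda>x. W x * W x)"
    and "pois_E l (\<lambda>x. W x * W x)
           \<le> pois_E l (\<lambda>x. (h x - (a0 + a1 * (x - l) + a2 * (x - l)\<^sup>2 + a3 * (x - l) ^ 3))\<^sup>2)"
proof -
  have gW: "gb W" unfolding W_def using h by (simp add: gb_simps gb_divide)
  have hC1: "pois_E l (\<lambda>x. h x * C1 l x) = l * d1" unfolding d1_def using E_C1[OF l h] .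
  have hC2: "pois_E l (\<lambda>x. h x * C2 l x) = l\<^sup>2 * d2" unfolding d2_def using E_C2[OF l h] .
  have hC3: "pois_E l (\<lambda>x. h x * C3 l x) = l ^ 3 * d3" unfolding d3_def using E_C3[OF l h] .
  note Es = EC1[OF l] EC2[OF l] EC3[OF l] EC11[OF l] EC22[OF l] EC33[OF l] EC12[OF l] EC13[OF l] EC23[OF l]
  have o0: "pois_E l W = 0"
    unfolding W_def using l h by (simp add: lin_simps Es m_def)
  have o1: "pois_E l (\<lambda>x. W x * C1 l x) = 0"
  proof -
    have "pois_E l (\<lambda>x. W x * C1 l x) = pois_E l (\<lambda>x. h x * C1 l x -
       (m * C1 l x + d1 * (C1 l x * C1 l x) + d2 / 2 * (C1 l x * C2 l x) + d3 / 6 * (C1 l x * C3 l x)))"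
      by (rule pE_cong) (simp add: W_def algebra_simps)
    also have "\<dots> = 0" using l h by (simp add: lin_simps Es hC1)
    finally show ?thesis .
  qed
  have o2: "pois_E l (\<lambda>x. W x * C2 l x) = 0"
  proof -
    have "pois_E l (\<lambda>x. W x * C2 l x) = pois_E l (\<lambda>x. h x * C2 l x -
       (m * C2 l x + d1 * (C1 l x * C2 l x) + d2 / 2 * (C2 l x * C2 l x) + d3 / 6 * (C2 l x * C3 l x)))"
      by (rule pE_cong) (simp add: W_def algebra_simps)
    also have "\<dots> = 0" using l h by (simp add: lin_simps Es hC2)
    finally show ?thesis .
  qed
  have o3: "pois_E l (\<lambda>x. W x * C3 l x) = 0"
  proof -
    have "pois_E l (\<lambda>x. W x * C3 l x) = pois_E l (\<lambda>x. h x * C3 l x -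
       (m * C3 l x + d1 * (C1 l x * C3 l x) + d2 / 2 * (C2 l x * C3 l x) + d3 / 6 * (C3 l x * C3 l x)))"
      by (rule pE_cong) (simp add: W_def algebra_simps)
    also have "\<dots> = 0" using l h by (simp add: lin_simps Es hC3)
    finally show ?thesis .
  qed
  note os = o0 o1 o2 o3
  define Z where "Z = (\<lambda>x. h x - r_coef h l * x)"
  have r: "r_coef h l = d1" unfolding d1_def using r_coef_eq[OF l h] .
  have gZ: "gb Z" unfolding Z_def using h by (simp add: gb_simps)
  have EZ: "pois_E l Z = m - d1 * l"
    unfolding Z_def r using l h by (simp add: lin_simps m_def E_id)
  have "pois_cov l Z Z = pois_E l (\<lambda>x. (Z x - pois_E l Z)\<^sup>2)" using pois_var[OF l gZ] .
  also have "\<dots> = pois_E l (\<lambda>x. W x * W x + 2 * (d2 / 2) * (W x * C2 l x) + 2 * (d3 / 6) * (W x * C3 l x)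
        + (d2 / 2)\<^sup>2 * (C2 l x * C2 l x) + 2 * (d2 / 2) * (d3 / 6) * (C2 l x * C3 l x)
        + (d3 / 6)\<^sup>2 * (C3 l x * C3 l x))"
  proof (rule pE_cong)
    fix x :: real
    have "Z x - pois_E l Z = W x + d2 / 2 * C2 l x + d3 / 6 * C3 l x"
      unfolding EZ unfolding Z_def r W_def C1_def by (simp add: algebra_simps)
    then show "(Z x - pois_E l Z)\<^sup>2 = W x * W x + 2 * (d2 / 2) * (W x * C2 l x) + 2 * (d3 / 6) * (W x * C3 l x)
        + (d2 / 2)\<^sup>2 * (C2 l x * C2 l x) + 2 * (d2 / 2) * (d3 / 6) * (C2 l x * C3 l x)
        + (d3 / 6)\<^sup>2 * (C3 l x * C3 l x)"
      by (simp add: power2_eq_square algebra_simps)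
  qed
  also have "\<dots> = pois_E l (\<lambda>x. W x * W x) + (d2 / 2)\<^sup>2 * (2 * l\<^sup>2) + (d3 / 6)\<^sup>2 * (6 * l ^ 3)"
    using l gW by (simp add: lin_simps Es os)
  finally have VZ: "pois_cov l Z Z = l\<^sup>2 * d2\<^sup>2 / 2 + l ^ 3 * d3\<^sup>2 / 6 + pois_E l (\<lambda>x. W x * W x)"
    by (simp add: power2_eq_square power3_eq_cube field_simps)
  have "pois_E l (\<lambda>x. Z x * C2 l x) = pois_E l (\<lambda>x. h x * C2 l x - d1 * (C1 l x * C2 l x) - (d1 * l) * C2 l x)"
    by (rule pE_cong) (simp add: Z_def r C1_def algebra_simps)
  also have "\<dots> = l\<^sup>2 * d2" using l h by (simp add: lin_simps Es hC2)
  finally have CZY: "pois_cov l Z (\<lambda>x. x\<^sup>2 - (2 * l + 1) * x) = l\<^sup>2 * d2"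
    using cov_Y[OF l gZ] by simp
  show "rho h l = l\<^sup>2 * d2 /
           sqrt ((l\<^sup>2 * d2\<^sup>2 / 2 + l ^ 3 * d3\<^sup>2 / 6 + pois_E l (\<lambda>x. W x * W x)) * (2 * l\<^sup>2))"
    unfolding rho_def pois_corr_def Z_def[symmetric] CZY VZ cov_YY[OF l] ..
  show R0: "0 \<le> pois_E l (\<lambda>x. W x * W x)"
    using l gW by (intro pE_nonneg) (auto simp: gb_simps)
  define e0 where "e0 = a0 + a2 * l + a3 * l"
  define e1 where "e1 = a1 + a2 + a3 * (3 * l + 1)"
  define e2 where "e2 = a2 + 3 * a3"
  define v0 where "v0 = m - e0"
  define v1 where "v1 = d1 - e1"
  define v2 where "v2 = d2 / 2 - e2"
  define v3 where "v3 = d3 / 6 - a3"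
  define V where "V = (\<lambda>x. v0 + v1 * C1 l x + v2 * C2 l x + v3 * C3 l x)"
  have gV: "gb V" unfolding V_def by (simp add: gb_simps)
  have "pois_E l (\<lambda>x. (h x - (a0 + a1 * (x - l) + a2 * (x - l)\<^sup>2 + a3 * (x - l) ^ 3))\<^sup>2)
      = pois_E l (\<lambda>x. W x * W x + 2 * v0 * W x + 2 * v1 * (W x * C1 l x) + 2 * v2 * (W x * C2 l x)
           + 2 * v3 * (W x * C3 l x) + V x * V x)"
  proof (rule pE_cong)
    fix x :: real
    have q: "a0 + a1 * (x - l) + a2 * (x - l)\<^sup>2 + a3 * (x - l) ^ 3
        = e0 + e1 * C1 l x + e2 * C2 l x + a3 * C3 l x"
      unfolding e0_def e1_def e2_def C1_def C2_def C3_def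
      by (simp add: power2_eq_square power3_eq_cube algebra_simps)
    have "h x - (a0 + a1 * (x - l) + a2 * (x - l)\<^sup>2 + a3 * (x - l) ^ 3) = W x + V x"
      unfolding q W_def V_def v0_def v1_def v2_def v3_def by (simp add: algebra_simps)
    then show "(h x - (a0 + a1 * (x - l) + a2 * (x - l)\<^sup>2 + a3 * (x - l) ^ 3))\<^sup>2
      = W x * W x + 2 * v0 * W x + 2 * v1 * (W x * C1 l x) + 2 * v2 * (W x * C2 l x)
           + 2 * v3 * (W x * C3 l x) + V x * V x"
      unfolding V_def by (simp add: power2_eq_square algebra_simps)
  qed
  also have "\<dots> = pois_E l (\<lambda>x. W x * W x) + pois_E l (\<lambda>x. V x * V x)"
    using l gW gV by (simp add: lin_simps os)
  finally show "pois_E l (\<lambda>x. W x * W x)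
           \<le> pois_E l (\<lambda>x. (h x - (a0 + a1 * (x - l) + a2 * (x - l)\<^sup>2 + a3 * (x - l) ^ 3))\<^sup>2)"
    using pE_nonneg[OF l, of "\<lambda>x. V x * V x"] gV by (simp add: gb_simps)
qed



definition dphi :: "real \<Rightarrow> nat \<Rightarrow> real \<Rightarrow> real" where
  "dphi d k t = (if k = 0 then psi d 1 t
     else if k = 1 then (if d = 0 then 2 * ln t + 2 else 2 / d * t powr d - 2 / (d * (d + 1)))
     else 2 * (\<Prod>j<k-2. (d - 1 - real j)) * t powr (d + 1 - real k))"

lemma dphi_deriv:
  assumes t: "t > 0" and d: "d > -1"
  shows "(dphi d k has_real_derivative dphi d (Suc k) t) (at t)"
proof -
  consider "k = 0 \<and> d = 0" | "k = 0 \<and> d \<noteq> 0" | "k = 1 \<and> d = 0" | "k = 1 \<and> d \<noteq> 0" | "k \<ge> 2"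
    by linarith
  then show ?thesis
  proof cases
    case 1
    then have e: "dphi d k = (\<lambda>t. 2 * t * ln t)" by (auto simp: dphi_def psi_def fun_eq_iff)
    have "((\<lambda>t. 2 * t * ln t) has_real_derivative (2 * ln t + 2 * t * (1 / t))) (at t)"
      using t by (auto intro!: derivative_eq_intros)
    then show ?thesis using 1 t unfolding e by (simp add: dphi_def)
  next
    case 2
    define c where "c = 2 / (d * (d + 1))"
    then have e: "dphi d k = (\<lambda>t. c * t * (t powr d - 1))"
      using 2 by (auto simp: dphi_def psi_def fun_eq_iff)
    have tp: "t powr d = t * t powr (d - 1)" using t by (simp add: powr_diff)
    have nz: "d + 1 \<noteq> 0" "d \<noteq> 0" using d 2 by auto
    have cd: "c * (d + 1) = 2 / d" unfolding c_def using nz by (simp add: divide_simps)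
    have "((\<lambda>t. c * t * (t powr d - 1)) has_real_derivative
        (c * (t powr d - 1) + c * t * (d * t powr (d - 1)))) (at t)"
      using t by (auto intro!: derivative_eq_intros simp: algebra_simps)
    moreover have "c * (t powr d - 1) + c * t * (d * t powr (d - 1)) = (c * (d + 1)) * t powr d - c"
      by (simp add: tp algebra_simps)
    moreover have "(c * (d + 1)) * t powr d - c = dphi d (Suc k) t"
      unfolding cd using 2 unfolding dphi_def c_def by simp
    ultimately show ?thesis unfolding e by simp
  next
    case 3
    then have e: "dphi d k = (\<lambda>t. 2 * ln t + 2)" by (auto simp: dphi_def fun_eq_iff)
    have "((\<lambda>t. 2 * ln t + 2) has_real_derivative (2 * (1 / t))) (at t)"
      using t by (auto intro!: derivative_eq_intros)
    moreover have "t powr (- 1) = 1 / t" using t by (simp add: powr_minus divide_inverse)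
    ultimately show ?thesis using 3 t unfolding e by (simp add: dphi_def)
  next
    case 4
    then have e: "dphi d k = (\<lambda>t. 2 / d * t powr d - 2 / (d * (d + 1)))" by (auto simp: dphi_def fun_eq_iff)
    have "((\<lambda>t. 2 / d * t powr d - 2 / (d * (d + 1))) has_real_derivative (2 / d * (d * t powr (d - 1)))) (at t)"
      using t by (auto intro!: derivative_eq_intros)
    then show ?thesis using 4 t unfolding e by (simp add: dphi_def)
  next
    case 5
    define P where "P = (\<Prod>j<k-2. (d - 1 - real j))"
    have e: "dphi d k = (\<lambda>t. 2 * P * t powr (d + 1 - real k))" using 5 by (auto simp: dphi_def fun_eq_iff P_def)
    have "((\<lambda>t. 2 * P * t powr (d + 1 - real k)) has_real_derivative
          (2 * P * ((d + 1 - real k) * t powr (d + 1 - real k - 1)))) (at t)"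
      using t by (auto intro!: derivative_eq_intros)
    moreover have "2 * P * ((d + 1 - real k) * t powr (d + 1 - real k - 1)) = dphi d (Suc k) t"
    proof -
      have s2: "k - Suc 0 = Suc (k - 2)" using 5 by simp
      have pr: "(\<Prod>j<k - Suc 0. d - 1 - real j) = P * (d + 1 - real k)"
        unfolding s2 P_def using 5 by (simp add: of_nat_diff)
      have ex: "d + 1 - real k - 1 = d + 1 - real (Suc k)" by simp
      show ?thesis unfolding ex using 5 by (simp add: dphi_def pr)
    qed
    ultimately show ?thesis unfolding e by simp
  qed
qed



lemma phi_bdd01:
  assumes d: "d > -1"
  shows "\<exists>B\<ge>0. \<forall>t. 0 \<le> t \<and> t \<le> 1 \<longrightarrow> \<bar>psi d 1 t\<bar> \<le> B"
proof (cases "d = 0")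
  case True
  show ?thesis
  proof (intro exI[of _ 2] conjI allI impI)
    fix t :: real assume t: "0 \<le> t \<and> t \<le> 1"
    show "\<bar>psi d 1 t\<bar> \<le> 2"
    proof (cases "t = 0")
      case False
      then have tp: "t > 0" using t by simp
      have "ln t \<le> 0" using t tp by simp
      moreover have "ln (1 / t) \<le> 1 / t - 1" using tp by (intro ln_le_minus_one) simp
      then have "- ln t \<le> 1 / t - 1" using tp by (simp add: ln_div)
      then have "t * (- ln t) \<le> t * (1 / t - 1)" using tp by (intro mult_left_mono) auto
      then have "t * (- ln t) \<le> 1 - t" using tp by (simp add: algebra_simps)
      moreover have "t * ln t \<le> 0" using \<open>ln t \<le> 0\<close> tp by (simp add: mult_nonneg_nonpos)
      ultimately show ?thesis using True t by (simp add: psi_def abs_if)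
    qed (simp add: psi_def True)
  qed simp
next
  case False
  define c where "c = 2 / (d * (d + 1))"
  show ?thesis
  proof (intro exI[of _ "2 * \<bar>c\<bar>"] conjI allI impI)
    fix t :: real assume t: "0 \<le> t \<and> t \<le> 1"
    have p: "psi d 1 t = c * (t * t powr d - t)" using False by (simp add: psi_def c_def algebra_simps)
    have a: "0 \<le> t * t powr d" using t by simp
    have b: "t * t powr d \<le> 1"
    proof (cases "t = 0")
      case False
      then have "t * t powr d = t powr (1 + d)" using t by (simp add: powr_mult_base)
      also have "\<dots> \<le> 1" using t d by (intro powr_le1) auto
      finally show ?thesis .
    qed simp
    have "\<bar>t * t powr d - t\<bar> \<le> 2" using a b t by linarith
    then have "\<bar>c\<bar> * \<bar>t * t powr d - t\<bar> \<le> \<bar>c\<bar> * 2" by (intro mult_left_mono) auto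
    then show "\<bar>psi d 1 t\<bar> \<le> 2 * \<bar>c\<bar>" by (simp add: p abs_mult)
  qed simp
qed

lemma sum_zero_pow: "0 < n \<Longrightarrow> (\<Sum>j<n. f j * (0::real) ^ j) = f 0"
proof (induction n)
  case (Suc n)
  then show ?case by (cases "n = 0") auto
qed simp

lemma phi_taylor:
  assumes d: "d > -1" and n: "n \<ge> 2"
  shows "\<exists>K\<ge>0. \<forall>t\<ge>0. \<bar>psi d 1 t - (\<Sum>j<n. dphi d j 1 / fact j * (t - 1) ^ j)\<bar>
            \<le> K * \<bar>t - 1\<bar> ^ n * (2 ^ n + (1 + t) ^ nat \<lceil>\<bar>d\<bar>\<rceil>)"
proof -
  define N where "N = nat \<lceil>\<bar>d\<bar>\<rceil>"
  obtain B where B: "B \<ge> 0" "\<And>t. 0 \<le> t \<Longrightarrow> t \<le> 1 \<Longrightarrow> \<bar>psi d 1 t\<bar> \<le> B"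
    using phi_bdd01[OF d] by blast
  define A where "A = (\<Sum>j<n. \<bar>dphi d j 1\<bar> / fact j)"
  define P where "P = (\<Prod>j<n-2. (d - 1 - real j))"
  define e where "e = d + 1 - real n"
  define K where "K = \<bar>2 * P\<bar> / fact n + (A + B) * 2 ^ n"
  have A0: "A \<ge> 0" unfolding A_def by (intro sum_nonneg) auto
  have K0: "K \<ge> 0" unfolding K_def using A0 B by auto
  have dn: "dphi d n s = 2 * P * s powr e" for s
    using n by (simp add: dphi_def P_def e_def)
  have dd0: "dphi d 0 = psi d 1" by (simp add: fun_eq_iff dphi_def)
  show ?thesis unfolding N_def[symmetric]
  proof (intro exI[of _ K] conjI allI impI)
    show "K \<ge> 0" by fact
    fix t :: real assume t: "t \<ge> 0"
    define S where "S = (\<Sum>j<n. dphi d j 1 / fact j * (t - 1) ^ j)"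
    have M1: "1 \<le> 2 ^ n + (1 + t) ^ N" using t by (simp add: add_increasing2)
    consider "t < 1/2" | "t = 1" | "t \<ge> 1/2 \<and> t \<noteq> 1" by linarith
    then show "\<bar>psi d 1 t - S\<bar> \<le> K * \<bar>t - 1\<bar> ^ n * (2 ^ n + (1 + t) ^ N)"
    proof cases
      case 1
      have tl: "\<bar>t - 1\<bar> \<le> 1" using t 1 by auto
      have "\<bar>S\<bar> \<le> (\<Sum>j<n. \<bar>dphi d j 1 / fact j * (t - 1) ^ j\<bar>)" unfolding S_def by (rule sum_abs)
      also have "\<dots> \<le> A" unfolding A_def
      proof (intro sum_mono)
        fix j assume "j \<in> {..<n}"
        have "\<bar>t - 1\<bar> ^ j \<le> 1" using tl by (intro power_le_one) auto
        then have "\<bar>dphi d j 1\<bar> / fact j * \<bar>t - 1\<bar> ^ j \<le> \<bar>dphi d j 1\<bar> / fact j * 1"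
          by (intro mult_left_mono) auto
        then show "\<bar>dphi d j 1 / fact j * (t - 1) ^ j\<bar> \<le> \<bar>dphi d j 1\<bar> / fact j"
          by (simp add: abs_mult power_abs)
      qed
      finally have Sb: "\<bar>S\<bar> \<le> A" .
      have "\<bar>psi d 1 t - S\<bar> \<le> B + A" using B(2)[of t] t 1 Sb by linarith
      also have "\<dots> \<le> (A + B) * (2 ^ n * \<bar>t - 1\<bar> ^ n) * (2 ^ n + (1 + t) ^ N)"
      proof -
        have "1 \<le> (2 * \<bar>t - 1\<bar>) ^ n" using 1 t by (intro one_le_power) auto
        then have h1: "1 \<le> 2 ^ n * \<bar>t - 1\<bar> ^ n" by (simp add: power_mult_distrib)
        have "1 \<le> (2 ^ n * \<bar>t - 1\<bar> ^ n) * (2 ^ n + (1 + t) ^ N)"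
          using h1 M1 by (metis mult_mono' zero_le_one mult_1_right order_trans)
        then have "(A + B) * 1 \<le> (A + B) * ((2 ^ n * \<bar>t - 1\<bar> ^ n) * (2 ^ n + (1 + t) ^ N))"
          using A0 B by (intro mult_left_mono) auto
        then show ?thesis by (simp add: mult.assoc)
      qed
      also have "\<dots> \<le> K * \<bar>t - 1\<bar> ^ n * (2 ^ n + (1 + t) ^ N)"
      proof -
        have "(A + B) * 2 ^ n \<le> K" unfolding K_def by simp
        then show ?thesis using M1
          by (intro mult_right_mono) (auto simp: mult.assoc[symmetric] intro!: mult_right_mono)
      qed
      finally show ?thesis .
    next
      case 2
      have "S = dphi d 0 1" unfolding S_def 2 using n sum_zero_pow[of n "\<lambda>j. dphi d j 1 / fact j"] by simp
      then show ?thesis using 2 K0 by (simp add: dd0)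
    next
      case 3
      have "\<exists>s. (if t < 1 then t < s \<and> s < 1 else 1 < s \<and> s < t) \<and>
          psi d 1 t = (\<Sum>m<n. dphi d m 1 / fact m * (t - 1) ^ m) + dphi d n s / fact n * (t - 1) ^ n"
      proof (rule Taylor[of n "dphi d" "psi d 1" "1/2" "t + 1"])
        show "\<forall>m s. m < n \<and> 1/2 \<le> s \<and> s \<le> t + 1 \<longrightarrow> (dphi d m has_real_derivative dphi d (Suc m) s) (at s)"
          using dphi_deriv d by auto
      qed (use n 3 t dd0 in auto)
      then obtain s where s: "if t < 1 then t < s \<and> s < 1 else 1 < s \<and> s < t"
        and eq: "psi d 1 t = S + dphi d n s / fact n * (t - 1) ^ n" unfolding S_def by blast
      have s0: "s \<ge> 1/2" "s \<le> 1 + t" using s 3 by (auto split: if_splits)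
      have spos: "s > 0" using s0 by simp
      have sb: "s powr e \<le> 2 ^ n + (1 + t) ^ N"
      proof (cases "e \<ge> 0")
        case True
        have "s powr e \<le> (1 + t) powr e" using s0 spos True by (intro powr_mono2) auto
        also have "\<dots> \<le> (1 + t) powr (real N)"
        proof (rule powr_mono)
          have "e \<le> \<bar>d\<bar>" unfolding e_def using n by linarith
          also have "\<bar>d\<bar> \<le> real N" unfolding N_def by linarith
          finally show "e \<le> real N" .
        qed (use t in auto)
        also have "\<dots> = (1 + t) ^ N" using t by (simp add: powr_realpow)
        finally have "s powr e \<le> (1 + t) ^ N" .
        moreover have "(0::real) \<le> 2 ^ n" by simp
        ultimately show ?thesis by linarith
      next
        case False
        have "s powr e \<le> (1/2) powr e" using s0 False by (intro powr_mono2') auto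
        also have "(1/2) powr e = 2 powr (- e)" by (simp add: powr_divide powr_minus_divide)
        also have "\<dots> \<le> 2 powr (real n)" using d unfolding e_def by (intro powr_mono) auto
        also have "\<dots> = 2 ^ n" by (simp add: powr_realpow)
        finally show ?thesis using t by (simp add: add_increasing2)
      qed
      have "\<bar>psi d 1 t - S\<bar> = \<bar>2 * P\<bar> * s powr e / fact n * \<bar>t - 1\<bar> ^ n"
        unfolding eq dn by (simp add: abs_mult power_abs)
      also have "\<dots> \<le> \<bar>2 * P\<bar> * (2 ^ n + (1 + t) ^ N) / fact n * \<bar>t - 1\<bar> ^ n"
        using sb by (intro mult_right_mono divide_right_mono mult_left_mono) auto
      also have "\<dots> = (\<bar>2 * P\<bar> / fact n) * \<bar>t - 1\<bar> ^ n * (2 ^ n + (1 + t) ^ N)" by simp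
      also have "\<dots> \<le> K * \<bar>t - 1\<bar> ^ n * (2 ^ n + (1 + t) ^ N)"
        unfolding K_def using A0 B M1 by (intro mult_right_mono) auto
      finally show ?thesis .
    qed
  qed
qed



lemma gb_abs[intro]: "gb f \<Longrightarrow> gb (\<lambda>x. \<bar>f x\<bar>)"
  unfolding gb_def by simp

lemma gb_le:
  assumes "gb g" "\<And>x. x \<ge> 0 \<Longrightarrow> \<bar>f x\<bar> \<le> g x"
  shows "gb f"
proof -
  obtain C B where 1: "C \<ge> 0" "B \<ge> 0" "\<And>x. x \<ge> 0 \<Longrightarrow> \<bar>g x\<bar> \<le> C * exp (B * x)"
    using gbE[OF assms(1)] by blast
  show ?thesis
  proof (rule gbI[of _ C B])
    fix x :: real assume "x \<ge> 0"
    then show "\<bar>f x\<bar> \<le> C * exp (B * x)" using assms(2)[of x] 1(3)[of x] by linarith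
  qed
qed

lemma gb_sum:
  assumes "finite A" "\<And>j. j \<in> A \<Longrightarrow> gb (f j)"
  shows "gb (\<lambda>x. \<Sum>j\<in>A. f j x)"
  using assms by (induction A rule: finite_induct) (auto intro!: gb_add)

lemma gb_scale:
  assumes "gb f" "l > 0"
  shows "gb (\<lambda>x. f (x / l))"
proof -
  obtain C B where 1: "C \<ge> 0" "B \<ge> 0" "\<And>x. x \<ge> 0 \<Longrightarrow> \<bar>f x\<bar> \<le> C * exp (B * x)"
    using gbE[OF assms(1)] by blast
  show ?thesis
  proof (rule gbI[of _ C "B / l"])
    fix x :: real assume "x \<ge> 0"
    then show "\<bar>f (x / l)\<bar> \<le> C * exp (B / l * x)" using 1(3)[of "x / l"] assms(2) by simp
  qed
qed

lemma psi_scale: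
  assumes l: "l > 0" shows "psi d l x = l * psi d 1 (x / l)"
proof -
  have e: "\<And>c A. l * (c * (x / l) * A) = c * x * A" using l by (simp add: field_simps)
  show ?thesis using l by (cases "d = 0") (simp_all add: psi_def e)
qed

lemma gb_psi1:
  assumes d: "d > -1"
  shows "gb (psi d 1)"
proof -
  obtain K where K: "K \<ge> 0" "\<forall>t\<ge>0. \<bar>psi d 1 t - (\<Sum>j<2. dphi d j 1 / fact j * (t - 1) ^ j)\<bar>
            \<le> K * \<bar>t - 1\<bar> ^ 2 * (2 ^ 2 + (1 + t) ^ nat \<lceil>\<bar>d\<bar>\<rceil>)"
    using phi_taylor[OF d, of 2] by auto
  define g where "g = (\<lambda>t. \<bar>\<Sum>j<2. dphi d j 1 / fact j * (t - 1) ^ j\<bar>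
       + K * \<bar>t - 1\<bar> ^ 2 * (2 ^ 2 + (1 + t) ^ nat \<lceil>\<bar>d\<bar>\<rceil>))"
  have "gb g" unfolding g_def
    by (intro gb_add gb_abs gb_sum gb_mult gb_power gb_diff gb_id gb_const) auto
  moreover have "\<bar>psi d 1 t\<bar> \<le> g t" if "t \<ge> 0" for t
    using K(2)[rule_format, OF that] unfolding g_def by linarith
  ultimately show ?thesis by (rule gb_le)
qed

lemma gb_psi:
  assumes d: "d > -1" and l: "l > 0"
  shows "gb (psi d l)"
proof -
  have "gb (\<lambda>x. l * psi d 1 (x / l))" using gb_scale[OF gb_psi1[OF d] l] by (intro gb_mult) auto
  moreover have "(\<lambda>x. l * psi d 1 (x / l)) = psi d l" using psi_scale[OF l] by auto
  ultimately show ?thesis by simp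
qed

lemma exp_quad:
  fixes s :: real
  assumes "\<bar>s\<bar> \<le> 1"
  shows "exp s \<le> 1 + s + 2 * s\<^sup>2"
proof -
  obtain u where u: "\<bar>u\<bar> \<le> \<bar>s\<bar>" "exp s = (\<Sum>m<2. s ^ m / fact m) + exp u / fact 2 * s ^ 2"
    using Maclaurin_exp_le[of s 2] by blast
  have "exp u \<le> exp 1" using u assms by simp
  also have "\<dots> \<le> 3" by (rule exp_le)
  finally have "exp u / 2 * s ^ 2 \<le> 3 / 2 * s ^ 2" by (intro mult_right_mono divide_right_mono) auto
  moreover have "(\<Sum>m<2. s ^ m / fact m) = 1 + s" by (simp add: numeral_2_eq_2)
  ultimately show ?thesis using u(2) by (simp add: numeral_2_eq_2) (smt (verit) zero_le_power2 power2_eq_square)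
qed

lemma E_exp_centered:
  assumes l: "l \<ge> 1" and s: "s = 1 / sqrt l \<or> s = - 1 / sqrt l"
  shows "pois_E l (\<lambda>x. exp (s * (x - l))) \<le> exp 2"
proof -
  have lp: "l > 0" using l by simp
  have sl: "\<bar>s\<bar> \<le> 1" using s l by (auto simp: real_sqrt_ge_one)
  have s2: "l * s\<^sup>2 = 1" using s lp by (auto simp: power_divide)
  have "pois_E l (\<lambda>x. exp (s * (x - l))) = pois_E l (\<lambda>x. exp (- s * l) * exp (s * x))"
    by (rule pE_cong) (simp add: exp_add[symmetric] algebra_simps)
  also have "\<dots> = exp (- s * l) * exp (l * (exp s - 1))" by (simp add: pE_cmult pE_mgf[OF lp])
  also have "\<dots> = exp (l * (exp s - 1 - s))" by (simp add: exp_add[symmetric] algebra_simps)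
  also have "\<dots> \<le> exp 2"
  proof -
    have "l * (exp s - 1 - s) \<le> l * (2 * s\<^sup>2)" using exp_quad[OF sl] lp by (intro mult_left_mono) auto
    also have "\<dots> = 2" using s2 by simp
    finally show ?thesis by simp
  qed
  finally show ?thesis .
qed

lemma pow_le_exp:
  assumes z: "(z::real) \<ge> 0"
  shows "z ^ M \<le> fact M * exp z"
proof -
  obtain u where u: "\<bar>u\<bar> \<le> \<bar>z\<bar>" "exp z = (\<Sum>m<Suc M. z ^ m / fact m) + exp u / fact (Suc M) * z ^ Suc M"
    using Maclaurin_exp_le[of z "Suc M"] by blast
  have "z ^ M / fact M \<le> (\<Sum>m<Suc M. z ^ m / fact m)"
    using z by (intro member_le_sum) auto
  also have "\<dots> \<le> exp z" using u(2) z by simp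
  finally show ?thesis by (simp add: field_simps)
qed



lemma gb_exp2[intro]: "gb (\<lambda>x. exp (s * (x - c)))"
proof (rule gbI[of _ "exp (- s * c)" s])
  fix x :: real
  show "\<bar>exp (s * (x - c))\<bar> \<le> exp (- s * c) * exp (s * x)"
    by (simp add: exp_add[symmetric] algebra_simps)
qed

lemma pointwise_moment:
  fixes l x K a W :: real and n N :: nat
  assumes l: "l \<ge> 1" and x: "x \<ge> 0"
    and a: "a = \<bar>x / l - 1\<bar>" and W: "W = 2 ^ n + (1 + x / l) ^ N"
    and K: "K \<ge> 0" and bnd: "\<bar>u\<bar> \<le> K * a ^ n * W"
  shows "l\<^sup>2 * u\<^sup>2 \<le> l\<^sup>2 / l ^ n * (4 * K\<^sup>2 * fact (4 * n + 2 * N) * exp 2) *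
            (exp ((1 / sqrt l) * (x - l)) + exp ((- 1 / sqrt l) * (x - l)))"
proof -
  have lp: "l > 0" using l by simp
  define y where "y = (x - l) / sqrt l"
  define Y where "Y = \<bar>y\<bar>"
  define z where "z = 2 + Y"
  have Y0: "Y \<ge> 0" unfolding Y_def by simp
  have z1: "z \<ge> 1" unfolding z_def using Y0 by simp
  have sl: "sqrt l \<ge> 1" using l by simp
  have aY: "a = Y / sqrt l"
  proof -
    have "x / l - 1 = (x - l) / l" using lp by (simp add: field_simps)
    also have "\<dots> = y / sqrt l" unfolding y_def using lp
      by (simp add: field_simps)
    finally show ?thesis unfolding a Y_def using sl by (simp add: abs_div)
  qed
  have a0: "a \<ge> 0" using a by simp
  have aleY: "a \<le> Y"
  proof -
    have "Y * 1 \<le> Y * sqrt l" using Y0 sl by (intro mult_left_mono) auto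
    then show ?thesis unfolding aY using sl by (simp add: pos_divide_le_eq)
  qed
  have Wz: "W \<le> 2 * z ^ (n + N)"
  proof -
    have "1 + x / l \<le> z" unfolding z_def using aleY a by linarith
    then have h1: "(1 + x / l) ^ N \<le> z ^ N" using x lp by (intro power_mono) auto
    have h2: "(2::real) ^ n \<le> z ^ n" unfolding z_def using Y0 by (intro power_mono) auto
    have h3: "z ^ N \<le> z ^ (n + N)" using z1 by (intro power_increasing) auto
    have h4: "z ^ n \<le> z ^ (n + N)" using z1 by (intro power_increasing) auto
    show ?thesis using h1 h2 h3 h4 W by linarith
  qed
  have W0: "W \<ge> 0" using W x lp by simp
  have "u\<^sup>2 \<le> (K * a ^ n * W)\<^sup>2"
    using bnd by (metis abs_ge_zero power2_abs power_mono)
  also have "\<dots> \<le> (K * a ^ n * (2 * z ^ (n + N)))\<^sup>2"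
    using K a0 W0 Wz by (intro power_mono mult_left_mono) auto
  also have "\<dots> = 4 * K\<^sup>2 * (a ^ n)\<^sup>2 * (z ^ (n + N))\<^sup>2" by (simp add: power_mult_distrib)
  also have "(a ^ n)\<^sup>2 = Y ^ (2 * n) / l ^ n"
  proof -
    have "(a ^ n)\<^sup>2 = (Y / sqrt l) ^ (2 * n)" unfolding aY by (simp add: power_mult[symmetric] mult.commute)
    also have "\<dots> = Y ^ (2 * n) / (sqrt l ^ 2) ^ n" by (simp add: power_divide power_mult)
    also have "\<dots> = Y ^ (2 * n) / l ^ n" using lp by simp
    finally show ?thesis .
  qed
  also have "4 * K\<^sup>2 * (Y ^ (2 * n) / l ^ n) * (z ^ (n + N))\<^sup>2 \<le> 4 * K\<^sup>2 * (z ^ (2 * n) / l ^ n) * (z ^ (n + N))\<^sup>2"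
    using Y0 z1 lp unfolding z_def by (intro mult_right_mono mult_left_mono divide_right_mono power_mono) auto
  also have "\<dots> = 4 * K\<^sup>2 / l ^ n * z ^ (4 * n + 2 * N)"
    by (simp add: power_mult[symmetric] power_add[symmetric] algebra_simps)
  also have "\<dots> \<le> 4 * K\<^sup>2 / l ^ n * (fact (4 * n + 2 * N) * exp z)"
    using z1 lp by (intro mult_left_mono pow_le_exp) auto
  also have "exp z = exp 2 * exp Y" unfolding z_def by (simp add: exp_add)
  finally have u2: "u\<^sup>2 \<le> 4 * K\<^sup>2 / l ^ n * (fact (4 * n + 2 * N) * (exp 2 * exp Y))" .
  have EY: "exp Y \<le> exp ((1 / sqrt l) * (x - l)) + exp ((- 1 / sqrt l) * (x - l))"
  proof -
    have "exp Y = exp y \<or> exp Y = exp (- y)" unfolding Y_def by (cases "y \<ge> 0") auto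
    moreover have "exp y = exp ((1 / sqrt l) * (x - l))" "exp (- y) = exp ((- 1 / sqrt l) * (x - l))"
      unfolding y_def by simp_all
    ultimately show ?thesis by (smt (verit) exp_gt_zero)
  qed
  have "4 * K\<^sup>2 / l ^ n * (fact (4 * n + 2 * N) * (exp 2 * exp Y)) \<le> 4 * K\<^sup>2 / l ^ n * (fact (4 * n + 2 * N) * (exp 2 *
      (exp ((1 / sqrt l) * (x - l)) + exp ((- 1 / sqrt l) * (x - l)))))"
    using EY lp by (intro mult_left_mono) auto
  with u2 have "u\<^sup>2 \<le> 4 * K\<^sup>2 / l ^ n * (fact (4 * n + 2 * N) * (exp 2 *
      (exp ((1 / sqrt l) * (x - l)) + exp ((- 1 / sqrt l) * (x - l)))))"
    by (rule order_trans)
  then have "l\<^sup>2 * u\<^sup>2 \<le> l\<^sup>2 * (4 * K\<^sup>2 / l ^ n * (fact (4 * n + 2 * N) * (exp 2 *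
      (exp ((1 / sqrt l) * (x - l)) + exp ((- 1 / sqrt l) * (x - l))))))"
    by (intro mult_left_mono) auto
  moreover have "l\<^sup>2 * (4 * K\<^sup>2 / l ^ n * (fact (4 * n + 2 * N) * (exp 2 *
      (exp ((1 / sqrt l) * (x - l)) + exp ((- 1 / sqrt l) * (x - l)))))) =
      l\<^sup>2 / l ^ n * (4 * K\<^sup>2 * fact (4 * n + 2 * N) * exp 2) *
            (exp ((1 / sqrt l) * (x - l)) + exp ((- 1 / sqrt l) * (x - l)))"
    using lp by (simp add: field_simps)
  ultimately show ?thesis by simp
qed



lemma taylor_moment:
  assumes d: "d > -1" and n: "n \<ge> 2"
  shows "\<exists>M\<ge>0. \<forall>l\<ge>1. pois_E l (\<lambda>x. (psi d l x - l * (\<Sum>j<n. dphi d j 1 / fact j * ((x - l) / l) ^ j))\<^sup>2)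
            \<le> M * l\<^sup>2 / l ^ n"
proof -
  define N where "N = nat \<lceil>\<bar>d\<bar>\<rceil>"
  obtain K where K: "K \<ge> 0" "\<And>t. t \<ge> 0 \<Longrightarrow> \<bar>psi d 1 t - (\<Sum>j<n. dphi d j 1 / fact j * (t - 1) ^ j)\<bar>
            \<le> K * \<bar>t - 1\<bar> ^ n * (2 ^ n + (1 + t) ^ N)"
    using phi_taylor[OF d n] unfolding N_def by blast
  define c where "c = 4 * K\<^sup>2 * fact (4 * n + 2 * N) * exp 2"
  have c0: "c \<ge> 0" unfolding c_def by simp
  show ?thesis
  proof (intro exI[of _ "c * (2 * exp 2)"] conjI allI impI)
    show "0 \<le> c * (2 * exp 2)" using c0 by simp
    fix l :: real assume l: "l \<ge> 1"
    have lp: "l > 0" using l by simp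
    define F where "F = (\<lambda>x. (psi d l x - l * (\<Sum>j<n. dphi d j 1 / fact j * ((x - l) / l) ^ j))\<^sup>2)"
    define E1 where "E1 = (\<lambda>x. exp ((1 / sqrt l) * (x - l)))"
    define E2 where "E2 = (\<lambda>x. exp ((- 1 / sqrt l) * (x - l)))"
    have gE: "gb E1" "gb E2" unfolding E1_def E2_def by (rule gb_exp2)+
    define G where "G = (\<lambda>x. l\<^sup>2 / l ^ n * c * (E1 x + E2 x))"
    have gF: "gb F" unfolding F_def using gb_psi[OF d lp]
      by (intro gb_power gb_diff gb_mult gb_sum gb_const gb_id gb_divide) auto
    have gG: "gb G" unfolding G_def using gE by (intro gb_mult gb_add gb_const)
    have FG: "F x \<le> G x" if x: "x \<ge> 0" for x
    proof -
      define u where "u = psi d 1 (x / l) - (\<Sum>j<n. dphi d j 1 / fact j * (x / l - 1) ^ j)"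
      have "(x - l) / l = x / l - 1" using lp by (simp add: field_simps)
      then have "F x = (l * psi d 1 (x / l) - l * (\<Sum>j<n. dphi d j 1 / fact j * (x / l - 1) ^ j))\<^sup>2"
        unfolding F_def using psi_scale[OF lp, of d x] by simp
      also have "\<dots> = l\<^sup>2 * u\<^sup>2"
      proof -
        have sq: "\<And>A B. (l * A - l * B)\<^sup>2 = l\<^sup>2 * (A - B)\<^sup>2" by (simp add: power2_eq_square algebra_simps)
        show ?thesis unfolding u_def by (rule sq)
      qed
      also have "\<dots> \<le> G x" unfolding G_def c_def E1_def E2_def
        by (rule pointwise_moment[OF l x refl refl K(1)]) (use K(2)[of "x / l"] x lp u_def in auto)
      finally show ?thesis .
    qed
    have "pois_E l F \<le> pois_E l G" using lp gF gG FG by (intro pE_mono) auto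
    also have "pois_E l G = l\<^sup>2 / l ^ n * c * (pois_E l E1 + pois_E l E2)"
      unfolding G_def pE_cmult pE_add[OF lp gE] ..
    also have "\<dots> \<le> l\<^sup>2 / l ^ n * c * (exp 2 + exp 2)"
      using E_exp_centered[OF l, of "1 / sqrt l"] E_exp_centered[OF l, of "- 1 / sqrt l"] c0 lp
      unfolding E1_def E2_def
      by (intro mult_left_mono add_mono) auto
    also have "\<dots> = c * (2 * exp 2) * l\<^sup>2 / l ^ n" by simp
    finally show "pois_E l (\<lambda>x. (psi d l x - l * (\<Sum>j<n. dphi d j 1 / fact j * ((x - l) / l) ^ j))\<^sup>2)
            \<le> c * (2 * exp 2) * l\<^sup>2 / l ^ n" unfolding F_def .
  qed
qed



lemma DD_poly:
  "D (D (\<lambda>x. b0 + b1 * (x - l) + b2 * (x - l)\<^sup>2 + b3 * (x - l) ^ 3 + b4 * (x - l) ^ 4)) x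
    = (2 * b2 + 6 * b3 + 14 * b4) + (6 * b3 + 24 * b4) * C1 l x + 12 * b4 * (C1 l x * C1 l x)"
  by (simp add: D_def C1_def power2_eq_square power3_eq_cube power4_eq_xxxx algebra_simps)

lemma DDD_poly:
  "D (D (D (\<lambda>x. b0 + b1 * (x - l) + b2 * (x - l)\<^sup>2 + b3 * (x - l) ^ 3 + b4 * (x - l) ^ 4))) x
    = (6 * b3 + 36 * b4) + 24 * b4 * C1 l x"
  by (simp add: D_def C1_def power2_eq_square power3_eq_cube power4_eq_xxxx algebra_simps)

lemma E_DD_poly:
  assumes l: "l > 0"
  shows "pois_E l (D (D (\<lambda>x. b0 + b1 * (x - l) + b2 * (x - l)\<^sup>2 + b3 * (x - l) ^ 3 + b4 * (x - l) ^ 4)))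
     = 2 * b2 + 6 * b3 + 14 * b4 + 12 * b4 * l"
proof -
  have "pois_E l (D (D (\<lambda>x. b0 + b1 * (x - l) + b2 * (x - l)\<^sup>2 + b3 * (x - l) ^ 3 + b4 * (x - l) ^ 4)))
     = pois_E l (\<lambda>x. (2 * b2 + 6 * b3 + 14 * b4) + (6 * b3 + 24 * b4) * C1 l x + 12 * b4 * (C1 l x * C1 l x))"
    by (rule pE_cong) (rule DD_poly)
  also have "\<dots> = 2 * b2 + 6 * b3 + 14 * b4 + 12 * b4 * l"
    using l by (simp add: lin_simps EC1 EC11)
  finally show ?thesis .
qed

lemma E_DDD_poly:
  assumes l: "l > 0"
  shows "pois_E l (D (D (D (\<lambda>x. b0 + b1 * (x - l) + b2 * (x - l)\<^sup>2 + b3 * (x - l) ^ 3 + b4 * (x - l) ^ 4))))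
     = 6 * b3 + 36 * b4"
proof -
  have "pois_E l (D (D (D (\<lambda>x. b0 + b1 * (x - l) + b2 * (x - l)\<^sup>2 + b3 * (x - l) ^ 3 + b4 * (x - l) ^ 4))))
     = pois_E l (\<lambda>x. (6 * b3 + 36 * b4) + 24 * b4 * C1 l x)"
    by (rule pE_cong) (rule DDD_poly)
  also have "\<dots> = 6 * b3 + 36 * b4"
    using l by (simp add: lin_simps EC1)
  finally show ?thesis .
qed

lemma amgm:
  fixes a b s :: real
  assumes s: "s > 0"
  shows "\<bar>a * b\<bar> \<le> (s * a\<^sup>2 + b\<^sup>2 / s) / 2"
proof -
  have "0 \<le> (s * \<bar>a\<bar> - \<bar>b\<bar>)\<^sup>2" by simp
  then have "2 * s * (\<bar>a\<bar> * \<bar>b\<bar>) \<le> s * s * (\<bar>a\<bar> * \<bar>a\<bar>) + \<bar>b\<bar> * \<bar>b\<bar>"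
    by (simp add: power2_eq_square algebra_simps)
  then have "2 * s * (\<bar>a\<bar> * \<bar>b\<bar>) \<le> s * s * a\<^sup>2 + b\<^sup>2"
    by (simp add: power2_eq_square)
  then have "2 * (\<bar>a\<bar> * \<bar>b\<bar>) \<le> (s * s * a\<^sup>2 + b\<^sup>2) / s"
    using s by (simp add: pos_le_divide_eq mult.commute mult.left_commute)
  also have "(s * s * a\<^sup>2 + b\<^sup>2) / s = s * a\<^sup>2 + b\<^sup>2 / s"
    using s by (simp add: add_divide_distrib)
  finally show ?thesis by (simp add: abs_mult)
qed

lemma E_amgm:
  assumes l: "l > 0" and f: "gb f" and g: "gb g" and s: "s > 0"
  shows "\<bar>pois_E l (\<lambda>x. f x * g x)\<bar> \<le> (s * pois_E l (\<lambda>x. (f x)\<^sup>2) + pois_E l (\<lambda>x. (g x)\<^sup>2) / s) / 2"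
proof -
  define H where "H = (\<lambda>x. (s * (f x)\<^sup>2 + (g x)\<^sup>2 / s) / 2)"
  have gH: "gb H" unfolding H_def using f g by (intro gb_divide gb_add gb_mult gb_power gb_const) auto
  have EH: "pois_E l H = (s * pois_E l (\<lambda>x. (f x)\<^sup>2) + pois_E l (\<lambda>x. (g x)\<^sup>2) / s) / 2"
    unfolding H_def using l f g by (simp add: lin_simps)
  have b: "\<bar>f x * g x\<bar> \<le> H x" for x unfolding H_def by (rule amgm[OF s])
  have "pois_E l (\<lambda>x. f x * g x) \<le> pois_E l H"
    using l f g gH b by (intro pE_mono) (auto intro: gb_mult abs_le_D1)
  moreover have "pois_E l (\<lambda>x. - (f x * g x)) \<le> pois_E l H"
    using l f g gH b by (intro pE_mono) (auto intro: gb_mult gb_minus abs_le_D2)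
  ultimately show ?thesis unfolding EH pE_uminus by linarith
qed



lemma dphi_vals: "dphi d 2 1 = 2" "dphi d 3 1 = 2 * (d - 1)" "dphi d 4 1 = 2 * (d - 1) * (d - 2)"
  by (simp_all add: dphi_def eval_nat_numeral algebra_simps)

lemma poly_conv5:
  fixes l x :: real and c :: "nat \<Rightarrow> real"
  assumes l: "l > 0"
  shows "l * (\<Sum>j<5. c j / fact j * ((x - l) / l) ^ j)
    = l * c 0 + c 1 * (x - l) + c 2 / (2 * l) * (x - l)\<^sup>2 + c 3 / (6 * l\<^sup>2) * (x - l) ^ 3
      + c 4 / (24 * l ^ 3) * (x - l) ^ 4"
  using l by (simp add: eval_nat_numeral power_divide field_simps)

lemma poly_conv4:
  fixes l x :: real and c :: "nat \<Rightarrow> real"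
  assumes l: "l > 0"
  shows "l * (\<Sum>j<4. c j / fact j * ((x - l) / l) ^ j)
    = l * c 0 + c 1 * (x - l) + c 2 / (2 * l) * (x - l)\<^sup>2 + c 3 / (6 * l\<^sup>2) * (x - l) ^ 3"
  using l by (simp add: eval_nat_numeral power_divide field_simps)

lemma R_est:
  assumes d: "d > -1"
  shows "\<exists>A\<ge>0. \<forall>l\<ge>1. \<exists>a0 a1 a2 a3.
     pois_E l (\<lambda>x. (psi d l x - (a0 + a1 * (x - l) + a2 * (x - l)\<^sup>2 + a3 * (x - l) ^ 3))\<^sup>2) \<le> A / l\<^sup>2"
proof -
  obtain M where M: "M \<ge> 0" "\<And>l. l \<ge> 1 \<Longrightarrow> pois_E l (\<lambda>x. (psi d l x - l * (\<Sum>j<4. dphi d j 1 / fact j * ((x - l) / l) ^ j))\<^sup>2)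
            \<le> M * l\<^sup>2 / l ^ 4"
    using taylor_moment[OF d, of 4] by auto
  show ?thesis
  proof (rule exI[of _ M], intro conjI allI impI)
    show "M \<ge> 0" by fact
    fix l :: real assume l: "l \<ge> 1"
    then have lp: "l > 0" by simp
    let ?c = "\<lambda>j. dphi d j 1"
    have "pois_E l (\<lambda>x. (psi d l x - (l * ?c 0 + ?c 1 * (x - l) + ?c 2 / (2 * l) * (x - l)\<^sup>2 + ?c 3 / (6 * l\<^sup>2) * (x - l) ^ 3))\<^sup>2)
        = pois_E l (\<lambda>x. (psi d l x - l * (\<Sum>j<4. dphi d j 1 / fact j * ((x - l) / l) ^ j))\<^sup>2)"
      by (rule pE_cong) (simp only: poly_conv4[OF lp])
    also have "\<dots> \<le> M * l\<^sup>2 / l ^ 4" using M(2)[OF l] .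
    also have "\<dots> = M / l\<^sup>2" using lp by (simp add: eval_nat_numeral field_simps)
    finally show "\<exists>a0 a1 a2 a3.
     pois_E l (\<lambda>x. (psi d l x - (a0 + a1 * (x - l) + a2 * (x - l)\<^sup>2 + a3 * (x - l) ^ 3))\<^sup>2) \<le> M / l\<^sup>2"
      by blast
  qed
qed

lemma delta_est:
  assumes d: "d > -1"
  shows "\<exists>A\<ge>0. \<forall>l\<ge>1. \<bar>pois_E l (D (D (psi d l))) - 2 / l\<bar> \<le> A / l\<^sup>2
            \<and> \<bar>pois_E l (D (D (D (psi d l)))) - 2 * (d - 1) / l\<^sup>2\<bar> \<le> A / l ^ 3"
proof -
  obtain M where M: "M \<ge> 0" "\<And>l. l \<ge> 1 \<Longrightarrow> pois_E l (\<lambda>x. (psi d l x - l * (\<Sum>j<5. dphi d j 1 / fact j * ((x - l) / l) ^ j))\<^sup>2)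
            \<le> M * l\<^sup>2 / l ^ 5"
    using taylor_moment[OF d, of 5] by auto
  define B1 where "B1 = \<bar>d - 1\<bar>"
  define B2 where "B2 = \<bar>(d - 1) * (d - 2)\<bar>"
  define A where "A = (M + 6) / 2 + 2 * B1 + 3 * B2"
  have B0: "B1 \<ge> 0" "B2 \<ge> 0" unfolding B1_def B2_def by auto
  show ?thesis
  proof (intro exI[of _ A] conjI allI impI)
    show "A \<ge> 0" unfolding A_def using M(1) B0 by simp
    fix l :: real assume l: "l \<ge> 1"
    then have lp: "l > 0" by simp
    define c where "c = (\<lambda>j. dphi d j 1)"
    define b0 where "b0 = l * c 0"
    define b1 where "b1 = c 1"
    define b2 where "b2 = c 2 / (2 * l)"
    define b3 where "b3 = c 3 / (6 * l\<^sup>2)"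
    define b4 where "b4 = c 4 / (24 * l ^ 3)"
    define p where "p = (\<lambda>x. b0 + b1 * (x - l) + b2 * (x - l)\<^sup>2 + b3 * (x - l) ^ 3 + b4 * (x - l) ^ 4)"
    define h where "h = psi d l"
    define e where "e = (\<lambda>x. h x - p x)"
    have gh: "gb h" unfolding h_def using gb_psi[OF d lp] .
    have gp: "gb p" unfolding p_def by (intro gb_add gb_mult gb_power gb_diff gb_const gb_id)
    have ge: "gb e" unfolding e_def using gh gp by (rule gb_diff)
    have Ee: "pois_E l (\<lambda>x. (e x)\<^sup>2) \<le> M / l ^ 3"
    proof -
      have "pois_E l (\<lambda>x. (e x)\<^sup>2)
          = pois_E l (\<lambda>x. (psi d l x - l * (\<Sum>j<5. dphi d j 1 / fact j * ((x - l) / l) ^ j))\<^sup>2)"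
        unfolding e_def h_def p_def b0_def b1_def b2_def b3_def b4_def c_def
        by (rule pE_cong) (simp only: poly_conv5[OF lp])
      also have "\<dots> \<le> M * l\<^sup>2 / l ^ 5" using M(2)[OF l] .
      also have "\<dots> = M / l ^ 3" using lp by (simp add: eval_nat_numeral field_simps)
      finally show ?thesis .
    qed
    have Ee0: "pois_E l (\<lambda>x. (e x)\<^sup>2) \<ge> 0" using lp ge by (intro pE_nonneg) auto
    have split: "pois_E l (\<lambda>x. h x * C k x) = pois_E l (\<lambda>x. p x * C k x) + pois_E l (\<lambda>x. e x * C k x)"
      if gC: "gb (C k)" for C :: "'z \<Rightarrow> real \<Rightarrow> real" and k
    proof -
      have "pois_E l (\<lambda>x. h x * C k x) = pois_E l (\<lambda>x. p x * C k x + e x * C k x)"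
        by (rule pE_cong) (simp add: e_def algebra_simps)
      also have "\<dots> = pois_E l (\<lambda>x. p x * C k x) + pois_E l (\<lambda>x. e x * C k x)"
        using lp gp ge gC by (intro pE_add) auto
      finally show ?thesis .
    qed
    have cv: "c 2 = 2" "c 3 = 2 * (d - 1)" "c 4 = 2 * (d - 1) * (d - 2)"
      unfolding c_def by (rule dphi_vals)+
    have EC2sq: "pois_E l (\<lambda>x. (C2 l x)\<^sup>2) = 2 * l\<^sup>2"
      using EC22[OF lp] by (simp add: power2_eq_square)
    have am2: "\<bar>pois_E l (\<lambda>x. e x * C2 l x)\<bar> \<le> (l\<^sup>2 * pois_E l (\<lambda>x. (e x)\<^sup>2) + pois_E l (\<lambda>x. (C2 l x)\<^sup>2) / l\<^sup>2) / 2"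
      using E_amgm[OF lp ge gb_C2[of l], of "l\<^sup>2"] lp by simp
    have "l\<^sup>2 * pois_E l (\<lambda>x. (e x)\<^sup>2) \<le> l\<^sup>2 * (M / l ^ 3)" using Ee lp by (intro mult_left_mono) auto
    also have "\<dots> = M / l" using lp by (simp add: eval_nat_numeral field_simps)
    also have "\<dots> \<le> M"
    proof -
      have "M * 1 \<le> M * l" using M(1) l by (intro mult_left_mono) auto
      then show ?thesis using lp by (simp add: divide_le_eq)
    qed
    finally have t2: "l\<^sup>2 * pois_E l (\<lambda>x. (e x)\<^sup>2) \<le> M" .
    have am2': "\<bar>pois_E l (\<lambda>x. e x * C2 l x)\<bar> \<le> (M + 2) / 2"
      using am2 t2 lp unfolding EC2sq by simp
    have "pois_E l (\<lambda>x. h x * C2 l x) = pois_E l (\<lambda>x. p x * C2 l x) + pois_E l (\<lambda>x. e x * C2 l x)"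
      using split[of C2 l] by auto
    then have "l\<^sup>2 * pois_E l (D (D h)) = l\<^sup>2 * pois_E l (D (D p)) + pois_E l (\<lambda>x. e x * C2 l x)"
      using E_C2[OF lp gh] E_C2[OF lp gp] by simp
    then have dd2: "pois_E l (D (D h)) - pois_E l (D (D p)) = pois_E l (\<lambda>x. e x * C2 l x) / l\<^sup>2"
      using lp by (simp add: field_simps)
    have Ep2: "pois_E l (D (D p)) - 2 / l = (2 * (d - 1) + (d - 1) * (d - 2) * (1 + 7 / (6 * l))) / l\<^sup>2"
      unfolding p_def E_DD_poly[OF lp] b2_def b3_def b4_def cv using lp
      by (simp add: field_simps power2_eq_square power3_eq_cube)
    have "\<bar>2 * (d - 1) + (d - 1) * (d - 2) * (1 + 7 / (6 * l))\<bar> \<le> 2 * B1 + B2 * (1 + 7 / (6 * l))"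
    proof -
      have "\<bar>(d - 1) * (d - 2) * (1 + 7 / (6 * l))\<bar> = B2 * (1 + 7 / (6 * l))"
        unfolding B2_def using lp by (simp add: abs_mult)
      moreover have "\<bar>2 * (d - 1)\<bar> = 2 * B1" unfolding B1_def using abs_mult[of 2 "d - 1"] by simp
      ultimately show ?thesis by (metis abs_triangle_ineq)
    qed
    also have "\<dots> \<le> 2 * B1 + B2 * 3"
    proof -
      have "7 / (6 * l) \<le> 7 / 6" using l by (simp add: divide_le_eq)
      then show ?thesis using B0 by (intro add_left_mono mult_left_mono) auto
    qed
    finally have num2: "\<bar>2 * (d - 1) + (d - 1) * (d - 2) * (1 + 7 / (6 * l))\<bar> \<le> 2 * B1 + 3 * B2" by simp
    have "\<bar>pois_E l (D (D h)) - 2 / l\<bar> \<le> \<bar>pois_E l (\<lambda>x. e x * C2 l x) / l\<^sup>2\<bar> + \<bar>(2 * (d - 1) + (d - 1) * (d - 2) * (1 + 7 / (6 * l))) / l\<^sup>2\<bar>"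
      using dd2 Ep2 by linarith
    also have "\<dots> \<le> (M + 2) / 2 / l\<^sup>2 + (2 * B1 + 3 * B2) / l\<^sup>2"
    proof (rule add_mono)
      show "\<bar>pois_E l (\<lambda>x. e x * C2 l x) / l\<^sup>2\<bar> \<le> (M + 2) / 2 / l\<^sup>2"
        unfolding abs_divide abs_power2 using am2' lp by (intro divide_right_mono) auto
      show "\<bar>(2 * (d - 1) + (d - 1) * (d - 2) * (1 + 7 / (6 * l))) / l\<^sup>2\<bar> \<le> (2 * B1 + 3 * B2) / l\<^sup>2"
        unfolding abs_divide abs_power2 using num2 lp by (intro divide_right_mono) auto
    qed
    also have "\<dots> = ((M + 2) / 2 + (2 * B1 + 3 * B2)) / l\<^sup>2" by (simp add: add_divide_distrib)
    also have "\<dots> \<le> A / l\<^sup>2" unfolding A_def using lp by (intro divide_right_mono) auto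
    finally show "\<bar>pois_E l (D (D (psi d l))) - 2 / l\<bar> \<le> A / l\<^sup>2" unfolding h_def .
    have EC3sq: "pois_E l (\<lambda>x. (C3 l x)\<^sup>2) = 6 * l ^ 3"
      using EC33[OF lp] by (simp add: power2_eq_square)
    have am3: "\<bar>pois_E l (\<lambda>x. e x * C3 l x)\<bar> \<le> (l ^ 3 * pois_E l (\<lambda>x. (e x)\<^sup>2) + pois_E l (\<lambda>x. (C3 l x)\<^sup>2) / l ^ 3) / 2"
      using E_amgm[OF lp ge gb_C3[of l], of "l ^ 3"] lp by simp
    have "l ^ 3 * pois_E l (\<lambda>x. (e x)\<^sup>2) \<le> l ^ 3 * (M / l ^ 3)" using Ee lp by (intro mult_left_mono) auto
    also have "\<dots> = M" using lp by simp
    finally have t3: "l ^ 3 * pois_E l (\<lambda>x. (e x)\<^sup>2) \<le> M" .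
    have am3': "\<bar>pois_E l (\<lambda>x. e x * C3 l x)\<bar> \<le> (M + 6) / 2"
      using am3 t3 lp unfolding EC3sq by simp
    have "pois_E l (\<lambda>x. h x * C3 l x) = pois_E l (\<lambda>x. p x * C3 l x) + pois_E l (\<lambda>x. e x * C3 l x)"
      using split[of C3 l] by auto
    then have "l ^ 3 * pois_E l (D (D (D h))) = l ^ 3 * pois_E l (D (D (D p))) + pois_E l (\<lambda>x. e x * C3 l x)"
      using E_C3[OF lp gh] E_C3[OF lp gp] by simp
    then have dd3: "pois_E l (D (D (D h))) - pois_E l (D (D (D p))) = pois_E l (\<lambda>x. e x * C3 l x) / l ^ 3"
      using lp by (simp add: field_simps)
    have Ep3: "pois_E l (D (D (D p))) - 2 * (d - 1) / l\<^sup>2 = (3 * ((d - 1) * (d - 2))) / l ^ 3"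
      unfolding p_def E_DDD_poly[OF lp] b3_def b4_def cv using lp
      by (simp add: field_simps power2_eq_square power3_eq_cube)
    have "\<bar>pois_E l (D (D (D h))) - 2 * (d - 1) / l\<^sup>2\<bar> \<le> \<bar>pois_E l (\<lambda>x. e x * C3 l x) / l ^ 3\<bar> + \<bar>(3 * ((d - 1) * (d - 2))) / l ^ 3\<bar>"
      using dd3 Ep3 by linarith
    also have "\<dots> \<le> (M + 6) / 2 / l ^ 3 + (3 * B2) / l ^ 3"
    proof (rule add_mono)
      show "\<bar>pois_E l (\<lambda>x. e x * C3 l x) / l ^ 3\<bar> \<le> (M + 6) / 2 / l ^ 3"
        unfolding abs_divide power_abs abs_of_pos[OF lp] using am3' lp by (intro divide_right_mono) auto
      have "\<bar>3 * ((d - 1) * (d - 2))\<bar> = 3 * B2" unfolding B2_def using abs_mult[of 3 "(d - 1) * (d - 2)"] by simp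
      then show "\<bar>(3 * ((d - 1) * (d - 2))) / l ^ 3\<bar> \<le> (3 * B2) / l ^ 3"
        unfolding abs_divide power_abs abs_of_pos[OF lp] using lp by simp
    qed
    also have "\<dots> = ((M + 6) / 2 + 3 * B2) / l ^ 3" by (simp add: add_divide_distrib)
    also have "\<dots> \<le> A / l ^ 3" unfolding A_def using lp B0 by (intro divide_right_mono) auto
    finally show "\<bar>pois_E l (D (D (D (psi d l)))) - 2 * (d - 1) / l\<^sup>2\<bar> \<le> A / l ^ 3" unfolding h_def .
  qed
qed



lemma inv_sqrt_bound:
  fixes w :: real
  assumes w: "w \<ge> 0"
  shows "\<bar>1 / sqrt (1 + w) - (1 - w / 2)\<bar> \<le> w\<^sup>2"
proof -
  define s where "s = sqrt (1 + w)"
  have s1: "s \<ge> 1" unfolding s_def using w by simp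
  have ss: "s\<^sup>2 = 1 + w" unfolding s_def using w by simp
  then have wd: "w = s\<^sup>2 - 1" by simp
  have eq: "1 / s - (1 - w / 2) = (s - 1)\<^sup>2 * (s + 2) / (2 * s)"
    unfolding wd using s1 by (simp add: field_simps power2_eq_square)
  have nn: "0 \<le> (s - 1)\<^sup>2 * (s + 2) / (2 * s)" using s1 by simp
  have "(s + 2) / (2 * s) \<le> (s + 1)\<^sup>2"
  proof -
    have "2 * (s + 1) \<le> (s + 1)\<^sup>2 * (2 * s)"
    proof -
      have "(s + 1) * 2 \<le> (s + 1)\<^sup>2 * (2 * s)"
        using s1 by (intro mult_mono) (auto simp: power2_eq_square)
      then show ?thesis by simp
    qed
    moreover have "s + 2 \<le> 2 * (s + 1)" using s1 by (simp add: algebra_simps)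
    ultimately have "s + 2 \<le> (s + 1)\<^sup>2 * (2 * s)" by (rule order_trans[rotated])
    then show ?thesis using s1 by (simp add: divide_le_eq)
  qed
  then have "(s - 1)\<^sup>2 * ((s + 2) / (2 * s)) \<le> (s - 1)\<^sup>2 * (s + 1)\<^sup>2"
    by (intro mult_left_mono) auto
  also have "(s - 1)\<^sup>2 * (s + 1)\<^sup>2 = w\<^sup>2" unfolding wd by (simp add: power2_eq_square algebra_simps)
  finally have "(s - 1)\<^sup>2 * (s + 2) / (2 * s) \<le> w\<^sup>2" by simp
  then show ?thesis unfolding s_def[symmetric] eq using nn by simp
qed

lemma final_real:
  fixes l d2 d3 R A dd :: real
  assumes A0: "A \<ge> 0" and l1: "l \<ge> 1" and lA: "l \<ge> 2 * A"
    and h2: "\<bar>d2 - 2 / l\<bar> \<le> A / l\<^sup>2" and h3: "\<bar>d3 - 2 * dd / l\<^sup>2\<bar> \<le> A / l ^ 3"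
    and R0: "0 \<le> R" and R1: "R \<le> A / l\<^sup>2"
  shows "\<bar>l\<^sup>2 * d2 / sqrt ((l\<^sup>2 * d2\<^sup>2 / 2 + l ^ 3 * d3\<^sup>2 / 6 + R) * (2 * l\<^sup>2)) - (1 - dd\<^sup>2 / (6 * l))\<bar>
     \<le> (((2 * \<bar>dd\<bar> + A)\<^sup>2 / 3 + 2 * A)\<^sup>2 + ((1 + \<bar>dd\<bar>) * A * (5 * \<bar>dd\<bar> + A) / 3 + 2 * A) / 2) / l\<^sup>2"
proof -
  have lp: "l > 0" using l1 by simp
  define P where "P = l * d2"
  define Q where "Q = l\<^sup>2 * d3"
  define c1 where "c1 = (2 * \<bar>dd\<bar> + A)\<^sup>2 / 3 + 2 * A"
  define c2 where "c2 = (1 + \<bar>dd\<bar>) * A * (5 * \<bar>dd\<bar> + A) / 3"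
  have Al: "A / l \<le> 1 / 2" using lA lp by (simp add: divide_le_eq)
  have Al1: "A / l \<le> A"
  proof -
    have "A * 1 \<le> A * l" using A0 l1 by (intro mult_left_mono) auto
    then show ?thesis using lp by (simp add: divide_le_eq)
  qed
  have Pb: "\<bar>P - 2\<bar> \<le> A / l"
  proof -
    have "P - 2 = l * (d2 - 2 / l)" unfolding P_def using lp by (simp add: field_simps)
    then have "\<bar>P - 2\<bar> = l * \<bar>d2 - 2 / l\<bar>" using lp by (simp add: abs_mult)
    also have "\<dots> \<le> l * (A / l\<^sup>2)" using h2 lp by (intro mult_left_mono) auto
    also have "\<dots> = A / l" using lp by (simp add: power2_eq_square)
    finally show ?thesis .
  qed
  have Qb: "\<bar>Q - 2 * dd\<bar> \<le> A / l"
  proof -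
    have "Q - 2 * dd = l\<^sup>2 * (d3 - 2 * dd / l\<^sup>2)" unfolding Q_def using lp by (simp add: field_simps)
    then have "\<bar>Q - 2 * dd\<bar> = l\<^sup>2 * \<bar>d3 - 2 * dd / l\<^sup>2\<bar>" using lp by (simp add: abs_mult)
    also have "\<dots> \<le> l\<^sup>2 * (A / l ^ 3)" using h3 lp by (intro mult_left_mono) auto
    also have "\<dots> = A / l" using lp by (simp add: power2_eq_square power3_eq_cube)
    finally show ?thesis .
  qed
  have P1: "P \<ge> 3 / 2" "P \<le> 5 / 2" using Pb Al by linarith+
  have Pp: "P > 0" using P1 by simp
  have PP: "P\<^sup>2 \<ge> 1"
  proof -
    have "1 * 1 \<le> P * P" using P1 by (intro mult_mono) auto
    then show ?thesis by (simp add: power2_eq_square)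
  qed
  have Qabs: "\<bar>Q\<bar> \<le> 2 * \<bar>dd\<bar> + A" using Qb Al1 by linarith
  define X where "X = Q\<^sup>2 / (3 * l) + 2 * R"
  have X0: "X \<ge> 0" unfolding X_def using R0 lp by simp
  have Xb: "X \<le> c1 / l"
  proof -
    have "Q\<^sup>2 \<le> (2 * \<bar>dd\<bar> + A)\<^sup>2" using Qabs by (metis abs_ge_zero power2_abs power_mono)
    then have a: "Q\<^sup>2 / (3 * l) \<le> (2 * \<bar>dd\<bar> + A)\<^sup>2 / 3 / l" using lp by (simp add: divide_right_mono)
    have "A / l\<^sup>2 \<le> A / l"
    proof (rule divide_left_mono)
      have "l * 1 \<le> l * l" using l1 lp by (intro mult_left_mono) auto
      then show "l \<le> l\<^sup>2" by (simp add: power2_eq_square)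
    qed (use A0 lp in auto)
    then have "R \<le> A / l" using R1 by linarith
    then have b: "2 * R \<le> 2 * A / l" by simp
    show ?thesis unfolding X_def c1_def using a b by (simp add: add_divide_distrib)
  qed
  define w where "w = X / P\<^sup>2"
  have w0: "w \<ge> 0" unfolding w_def using X0 by simp
  have wX: "w \<le> X"
  proof -
    have "X * 1 \<le> X * P\<^sup>2" using X0 PP by (intro mult_left_mono) auto
    then show ?thesis unfolding w_def using Pp by (simp add: divide_le_eq)
  qed
  have rho_eq: "l\<^sup>2 * d2 / sqrt ((l\<^sup>2 * d2\<^sup>2 / 2 + l ^ 3 * d3\<^sup>2 / 6 + R) * (2 * l\<^sup>2)) = 1 / sqrt (1 + w)"
  proof -
    have d2e: "d2 = P / l" unfolding P_def using lp by simp
    have d3e: "d3 = Q / l\<^sup>2" unfolding Q_def using lp by simp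
    have "(l\<^sup>2 * d2\<^sup>2 / 2 + l ^ 3 * d3\<^sup>2 / 6 + R) * (2 * l\<^sup>2) = (l * P)\<^sup>2 * (1 + w)"
      unfolding d2e d3e w_def X_def using lp Pp by (simp add: field_simps power2_eq_square power3_eq_cube)
    then have "sqrt ((l\<^sup>2 * d2\<^sup>2 / 2 + l ^ 3 * d3\<^sup>2 / 6 + R) * (2 * l\<^sup>2)) = (l * P) * sqrt (1 + w)"
      using lp Pp by (simp add: real_sqrt_mult)
    moreover have "l\<^sup>2 * d2 = l * P" unfolding P_def by (simp add: power2_eq_square)
    moreover have "sqrt (1 + w) > 0" using w0 by simp
    ultimately show ?thesis using lp Pp by simp
  qed
  define v where "v = dd\<^sup>2 / (3 * l)"
  have main: "\<bar>1 / sqrt (1 + w) - (1 - dd\<^sup>2 / (6 * l))\<bar> \<le> w\<^sup>2 + \<bar>w - v\<bar> / 2"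
  proof -
    have e: "dd\<^sup>2 / (6 * l) = v / 2" unfolding v_def by simp
    have eq: "1 / sqrt (1 + w) - (1 - dd\<^sup>2 / (6 * l)) = (1 / sqrt (1 + w) - (1 - w / 2)) - (w - v) / 2"
      unfolding e by (simp add: field_simps)
    have "\<bar>(1 / sqrt (1 + w) - (1 - w / 2)) - (w - v) / 2\<bar> \<le> \<bar>1 / sqrt (1 + w) - (1 - w / 2)\<bar> + \<bar>(w - v) / 2\<bar>"
      by (rule abs_triangle_ineq4)
    moreover have "\<bar>(w - v) / 2\<bar> = \<bar>w - v\<bar> / 2" by simp
    ultimately show ?thesis unfolding eq using inv_sqrt_bound[OF w0] by linarith
  qed
  have w2: "w\<^sup>2 \<le> c1\<^sup>2 / l\<^sup>2"
  proof -
    have "w \<le> c1 / l" using wX Xb by linarith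
    then have "w\<^sup>2 \<le> (c1 / l)\<^sup>2" using w0 by (intro power_mono) auto
    then show ?thesis by (simp add: power_divide)
  qed
  have wv: "\<bar>w - v\<bar> \<le> (c2 + 2 * A) / l\<^sup>2"
  proof -
    have split: "w - v = (Q\<^sup>2 - dd\<^sup>2 * P\<^sup>2) / (3 * l * P\<^sup>2) + 2 * R / P\<^sup>2"
      unfolding w_def v_def X_def using lp Pp by (simp add: field_simps power2_eq_square)
    have f1: "\<bar>Q - dd * P\<bar> \<le> (1 + \<bar>dd\<bar>) * A / l"
    proof -
      have "Q - dd * P = (Q - 2 * dd) - dd * (P - 2)" by (simp add: algebra_simps)
      then have "\<bar>Q - dd * P\<bar> \<le> \<bar>Q - 2 * dd\<bar> + \<bar>dd\<bar> * \<bar>P - 2\<bar>" by (simp add: abs_mult[symmetric] abs_triangle_ineq4)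
      also have "\<dots> \<le> A / l + \<bar>dd\<bar> * (A / l)" using Qb Pb by (intro add_mono mult_left_mono) auto
      also have "\<dots> = (1 + \<bar>dd\<bar>) * A / l" by (simp add: algebra_simps add_divide_distrib)
      finally show ?thesis .
    qed
    have f2: "\<bar>Q + dd * P\<bar> \<le> 5 * \<bar>dd\<bar> + A"
    proof -
      have "\<bar>Q + dd * P\<bar> \<le> \<bar>Q\<bar> + \<bar>dd * P\<bar>" by (rule abs_triangle_ineq)
      also have "\<bar>Q\<bar> + \<bar>dd * P\<bar> = \<bar>Q\<bar> + \<bar>dd\<bar> * P" using Pp by (simp add: abs_mult)
      also have "\<dots> \<le> (2 * \<bar>dd\<bar> + A) + \<bar>dd\<bar> * 3" using Qabs P1 by (intro add_mono mult_left_mono) auto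
      finally show ?thesis by simp
    qed
    have "\<bar>Q\<^sup>2 - dd\<^sup>2 * P\<^sup>2\<bar> = \<bar>Q - dd * P\<bar> * \<bar>Q + dd * P\<bar>"
      by (simp add: abs_mult[symmetric] power2_eq_square algebra_simps)
    also have "\<dots> \<le> ((1 + \<bar>dd\<bar>) * A / l) * (5 * \<bar>dd\<bar> + A)"
      using f1 f2 by (intro mult_mono) auto
    finally have f3: "\<bar>Q\<^sup>2 - dd\<^sup>2 * P\<^sup>2\<bar> \<le> (1 + \<bar>dd\<bar>) * A * (5 * \<bar>dd\<bar> + A) / l" by simp
    have t1: "\<bar>(Q\<^sup>2 - dd\<^sup>2 * P\<^sup>2) / (3 * l * P\<^sup>2)\<bar> \<le> c2 / l\<^sup>2"
    proof -
      have "\<bar>(Q\<^sup>2 - dd\<^sup>2 * P\<^sup>2) / (3 * l * P\<^sup>2)\<bar> = \<bar>Q\<^sup>2 - dd\<^sup>2 * P\<^sup>2\<bar> / (3 * l * P\<^sup>2)"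
        using lp Pp by (simp add: abs_divide abs_mult)
      also have "\<dots> \<le> \<bar>Q\<^sup>2 - dd\<^sup>2 * P\<^sup>2\<bar> / (3 * l)"
      proof (rule divide_left_mono)
        show "3 * l \<le> 3 * l * P\<^sup>2" using PP lp by simp
      qed (use lp Pp in auto)
      also have "\<dots> \<le> ((1 + \<bar>dd\<bar>) * A * (5 * \<bar>dd\<bar> + A) / l) / (3 * l)"
        using f3 lp by (intro divide_right_mono) auto
      also have "\<dots> = c2 / l\<^sup>2" unfolding c2_def by (simp add: power2_eq_square field_simps)
      finally show ?thesis .
    qed
    have t2: "\<bar>2 * R / P\<^sup>2\<bar> \<le> 2 * A / l\<^sup>2"
    proof -
      have "\<bar>2 * R / P\<^sup>2\<bar> = 2 * R / P\<^sup>2" using R0 by simp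
      also have "\<dots> \<le> 2 * R"
      proof -
        have "(2 * R) * 1 \<le> (2 * R) * P\<^sup>2" using R0 PP by (intro mult_left_mono) auto
        then show ?thesis using Pp by (simp add: divide_le_eq)
      qed
      also have "\<dots> \<le> 2 * A / l\<^sup>2" using R1 by simp
      finally show ?thesis .
    qed
    have "\<bar>w - v\<bar> \<le> c2 / l\<^sup>2 + 2 * A / l\<^sup>2" unfolding split using abs_triangle_ineq[of "(Q\<^sup>2 - dd\<^sup>2 * P\<^sup>2) / (3 * l * P\<^sup>2)" "2 * R / P\<^sup>2"] t1 t2 by linarith
    then show ?thesis by (simp add: add_divide_distrib)
  qed
  have "\<bar>l\<^sup>2 * d2 / sqrt ((l\<^sup>2 * d2\<^sup>2 / 2 + l ^ 3 * d3\<^sup>2 / 6 + R) * (2 * l\<^sup>2)) - (1 - dd\<^sup>2 / (6 * l))\<bar>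
      \<le> c1\<^sup>2 / l\<^sup>2 + (c2 + 2 * A) / l\<^sup>2 / 2"
    unfolding rho_eq
  proof (rule order_trans[OF main], rule add_mono[OF w2])
    show "\<bar>w - v\<bar> / 2 \<le> (c2 + 2 * A) / l\<^sup>2 / 2" using wv by (rule divide_right_mono) simp
  qed
  also have "\<dots> = (c1\<^sup>2 + (c2 + 2 * A) / 2) / l\<^sup>2" using lp by (simp add: field_simps)
  finally show ?thesis unfolding c1_def c2_def .
qed



lemma pointwise_main:
  assumes d: "d > -1"
  shows "\<exists>L K. \<forall>l\<ge>L. \<bar>rho (psi d l) l - (1 - (d - 1)\<^sup>2 / (6 * l))\<bar> \<le> K / l\<^sup>2"
proof -
  obtain A1 where A1: "A1 \<ge> 0" "\<And>l. l \<ge> 1 \<Longrightarrow> \<bar>pois_E l (D (D (psi d l))) - 2 / l\<bar> \<le> A1 / l\<^sup>2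
            \<and> \<bar>pois_E l (D (D (D (psi d l)))) - 2 * (d - 1) / l\<^sup>2\<bar> \<le> A1 / l ^ 3"
    using delta_est[OF d] by blast
  obtain A2 where A2: "A2 \<ge> 0" "\<And>l. l \<ge> 1 \<Longrightarrow> \<exists>a0 a1 a2 a3.
     pois_E l (\<lambda>x. (psi d l x - (a0 + a1 * (x - l) + a2 * (x - l)\<^sup>2 + a3 * (x - l) ^ 3))\<^sup>2) \<le> A2 / l\<^sup>2"
    using R_est[OF d] by blast
  define A where "A = A1 + A2"
  define dd where "dd = d - 1"
  define K where "K = ((2 * \<bar>dd\<bar> + A)\<^sup>2 / 3 + 2 * A)\<^sup>2 + ((1 + \<bar>dd\<bar>) * A * (5 * \<bar>dd\<bar> + A) / 3 + 2 * A) / 2"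
  show ?thesis
  proof (rule exI[of _ "max 1 (2 * A)"], rule exI[of _ K], intro allI impI)
    fix l :: real assume l: "l \<ge> max 1 (2 * A)"
    then have l1: "l \<ge> 1" and lA: "l \<ge> 2 * A" by auto
    then have lp: "l > 0" by simp
    have g: "gb (psi d l)" using gb_psi[OF d lp] .
    define h where "h = psi d l"
    have "\<exists>R. rho h l = l\<^sup>2 * pois_E l (D (D h)) /
           sqrt ((l\<^sup>2 * (pois_E l (D (D h)))\<^sup>2 / 2 + l ^ 3 * (pois_E l (D (D (D h))))\<^sup>2 / 6 + R) * (2 * l\<^sup>2))
        \<and> 0 \<le> R \<and> (\<forall>a0 a1 a2 a3. R \<le> pois_E l (\<lambda>x. (h x - (a0 + a1 * (x - l) + a2 * (x - l)\<^sup>2 + a3 * (x - l) ^ 3))\<^sup>2))"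
      unfolding h_def using rho_struct[OF lp g] by blast
    then obtain R where R: "rho h l = l\<^sup>2 * pois_E l (D (D h)) /
           sqrt ((l\<^sup>2 * (pois_E l (D (D h)))\<^sup>2 / 2 + l ^ 3 * (pois_E l (D (D (D h))))\<^sup>2 / 6 + R) * (2 * l\<^sup>2))"
      "0 \<le> R" "\<And>a0 a1 a2 a3. R \<le> pois_E l (\<lambda>x. (h x - (a0 + a1 * (x - l) + a2 * (x - l)\<^sup>2 + a3 * (x - l) ^ 3))\<^sup>2)"
      by blast
    obtain a0 a1 a2 a3 where "pois_E l (\<lambda>x. (psi d l x - (a0 + a1 * (x - l) + a2 * (x - l)\<^sup>2 + a3 * (x - l) ^ 3))\<^sup>2) \<le> A2 / l\<^sup>2"
      using A2(2)[OF l1] by blast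
    then have R1': "R \<le> A2 / l\<^sup>2" using R(3)[of a0 a1 a2 a3] unfolding h_def by linarith
    have R1: "R \<le> A / l\<^sup>2"
    proof -
      have "A2 / l\<^sup>2 \<le> A / l\<^sup>2" unfolding A_def using A1(1) lp by (intro divide_right_mono) auto
      then show ?thesis using R1' by linarith
    qed
    have h2: "\<bar>pois_E l (D (D h)) - 2 / l\<bar> \<le> A / l\<^sup>2"
    proof -
      have "A1 / l\<^sup>2 \<le> A / l\<^sup>2" unfolding A_def using A2(1) lp by (intro divide_right_mono) auto
      then show ?thesis using A1(2)[OF l1] unfolding h_def by linarith
    qed
    have h3: "\<bar>pois_E l (D (D (D h))) - 2 * dd / l\<^sup>2\<bar> \<le> A / l ^ 3"
    proof -
      have "A1 / l ^ 3 \<le> A / l ^ 3" unfolding A_def using A2(1) lp by (intro divide_right_mono) auto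
      then show ?thesis using A1(2)[OF l1] unfolding h_def dd_def by linarith
    qed
    have A0: "A \<ge> 0" unfolding A_def using A1(1) A2(1) by simp
    have "\<bar>rho h l - (1 - dd\<^sup>2 / (6 * l))\<bar> \<le> K / l\<^sup>2"
      unfolding R(1) K_def by (rule final_real[OF A0 l1 lA h2 h3 R(2) R1])
    then show "\<bar>rho (psi d l) l - (1 - (d - 1)\<^sup>2 / (6 * l))\<bar> \<le> K / l\<^sup>2" unfolding h_def dd_def .
  qed
qed

theorem lemma2p3:
  fixes lam :: "nat \<Rightarrow> real" and d :: real
  assumes pos: "\<And>n. lam n > 0"
    and lim: "filterlim lam at_top sequentially"
    and d: "d > -1"
  shows "(\<lambda>n. rho (psi d (lam n)) (lam n) - (1 - (d - 1)\<^sup>2 / (6 * lam n)))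
           \<in> O(\<lambda>n. 1 / (lam n)\<^sup>2)"
proof -
  obtain L K where LK: "\<And>l. l \<ge> L \<Longrightarrow> \<bar>rho (psi d l) l - (1 - (d - 1)\<^sup>2 / (6 * l))\<bar> \<le> K / l\<^sup>2"
    using pointwise_main[OF d] by blast
  have ev: "eventually (\<lambda>n. L \<le> lam n) sequentially"
    using lim unfolding filterlim_at_top by blast
  show ?thesis
  proof (rule bigoI)
    show "eventually (\<lambda>n. norm (rho (psi d (lam n)) (lam n) - (1 - (d - 1)\<^sup>2 / (6 * lam n)))
        \<le> K * norm (1 / (lam n)\<^sup>2)) sequentially"
      using ev
    proof eventually_elim
      case (elim n)
      have "norm (1 / (lam n)\<^sup>2) = 1 / (lam n)\<^sup>2" using pos[of n] by simp
      then show ?case using LK[OF elim] by simp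
    qed
  qed
qed

end
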